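(* For every $F\in\mathcal F$ the diagonal operator $M_F$ belongs to $A_W$. Moreover, $\mathcal F$ is the smallest commutative C$^*$-algebra of bounded functions on $\mathcal V$ that (1) contains all functions $(n,x)\mapsto f(x)$ with $f\in C(\mathbb Z_s)$, and (2) is closed under the maps $\mathfrak a_W$ and $\mathfrak b_W$.
   Context: Fix an integer $s\ge2$; $\mathbb Z_s$ is the compact ring of $s$-adic integers. Let $\mathcal V=\{(n,x): n\in\mathbb Z_{\ge0},\ x\in\mathbb Z,\ 0\le x<s^n\}$, $H=\ell^2(\mathcal V)$ with orthonormal basis $\{E_{(n,x)}\}$, $M_fE_{(n,x)}=f(x)E_{(n,x)}$ for $f\in C(\mathbb Z_s)$, and for a bounded $F:\mathcal V\to\mathbb C$, $M_FE_{(n,x)}=F(n,x)E_{(n,x)}$. The Serre shift is the isometry $WE_{(n,x)}=\frac1{\sqrt s}\sum_{j=0}^{s-1}E_{(n+1,x+js^n)}$, and $A_W=C^*(W,M_f:f\in C(\mathbb Z_s))$. For bounded $F$ on $\mathcal V$: $\mathfrak a_WF(n,x)=F(n-1,x\bmod s^{n-1})$ if $n\ge1$ and $0$ if $n=0$; $\mathfrak b_WF(n,x)=\frac1s\sum_{j=0}^{s-1}F(n+1,x+js^n)$. $\mathcal F$ is the set of $F:\mathcal V\to\mathbb C$ for which there exists $f_F\in C(\mathbb Z_s)$ with $\lim_{n\to\infty}\sup_{0\le x<s^n}|F(n,x)-f_F(x)|=0$. *)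

theory Defs
  imports "HOL-Analysis.Analysis"
begin

type_synonym vtx = "nat \<times> nat"
type_synonym vec = "vtx \<Rightarrow> complex"
type_synonym op = "vec \<Rightarrow> vec"

text \<open>The s-adic integers as the inverse limit of Z/s^n Z (product topology on nat => nat).\<close>
definition Zs :: "nat \<Rightarrow> (nat \<Rightarrow> nat) set" where
  "Zs s = {a. \<forall>n. a n < s ^ n \<and> a (Suc n) mod s ^ n = a n}"

definition emb :: "nat \<Rightarrow> nat \<Rightarrow> (nat \<Rightarrow> nat)" where
  "emb s x = (\<lambda>n. x mod s ^ n)"

definition Cont :: "nat \<Rightarrow> ((nat \<Rightarrow> nat) \<Rightarrow> complex) set" where
  "Cont s = {f. continuous_on (Zs s) f}"

definition V :: "nat \<Rightarrow> vtx set" where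
  "V s = {(n, x). x < s ^ n}"

definition l2 :: "nat \<Rightarrow> vec set" where
  "l2 s = {g. (\<forall>v. v \<notin> V s \<longrightarrow> g v = 0) \<and> (\<lambda>v. (cmod (g v))\<^sup>2) summable_on UNIV}"

definition l2norm :: "vec \<Rightarrow> real" where
  "l2norm g = sqrt (\<Sum>\<^sub>\<infinity>v. (cmod (g v))\<^sup>2)"

definition l2inner :: "vec \<Rightarrow> vec \<Rightarrow> complex" where
  "l2inner g h = (\<Sum>\<^sub>\<infinity>v. cnj (g v) * h v)"

definition bop :: "nat \<Rightarrow> op \<Rightarrow> bool" where
  "bop s T \<longleftrightarrow> (\<forall>g\<in>l2 s. T g \<in> l2 s)
     \<and> (\<forall>g\<in>l2 s. \<forall>h\<in>l2 s. \<forall>c. T (\<lambda>v. g v + h v) = (\<lambda>v. T g v + T h v)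
                             \<and> T (\<lambda>v. c * g v) = (\<lambda>v. c * T g v))
     \<and> (\<exists>C. \<forall>g\<in>l2 s. l2norm (T g) \<le> C * l2norm g)"

definition opnorm :: "nat \<Rightarrow> op \<Rightarrow> real" where
  "opnorm s T = Sup {l2norm (T g) | g. g \<in> l2 s \<and> l2norm g \<le> 1}"

definition Wop :: "nat \<Rightarrow> op" where
  "Wop s g = (\<lambda>(n, x). if n = 0 \<or> \<not> x < s ^ n then 0
                        else g (n - 1, x mod s ^ (n - 1)) / complex_of_real (sqrt (real s)))"

definition Mf :: "nat \<Rightarrow> ((nat \<Rightarrow> nat) \<Rightarrow> complex) \<Rightarrow> op" where
  "Mf s f g = (\<lambda>(n, x). f (emb s x) * g (n, x))"

definition MF :: "vec \<Rightarrow> op" where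
  "MF F g = (\<lambda>v. F v * g v)"

inductive_set AW :: "nat \<Rightarrow> op set" for s :: nat where
  gen_W: "Wop s \<in> AW s"
| gen_M: "f \<in> Cont s \<Longrightarrow> Mf s f \<in> AW s"
| add: "T \<in> AW s \<Longrightarrow> S \<in> AW s \<Longrightarrow> (\<lambda>g v. T g v + S g v) \<in> AW s"
| smult: "T \<in> AW s \<Longrightarrow> (\<lambda>g v. c * T g v) \<in> AW s"
| comp: "T \<in> AW s \<Longrightarrow> S \<in> AW s \<Longrightarrow> (\<lambda>g. T (S g)) \<in> AW s"
| adj: "T \<in> AW s \<Longrightarrow> bop s S \<Longrightarrow>
        (\<forall>g\<in>l2 s. \<forall>h\<in>l2 s. l2inner (T g) h = l2inner g (S h)) \<Longrightarrow> S \<in> AW s"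
| lim: "(\<And>k. Ts k \<in> AW s) \<Longrightarrow> bop s T \<Longrightarrow>
        (\<lambda>k. opnorm s (\<lambda>g v. Ts k g v - T g v)) \<longlonglongrightarrow> 0 \<Longrightarrow> T \<in> AW s"

text \<open>Functions on V are represented as functions on nat x nat vanishing off V.\<close>
definition aW :: "nat \<Rightarrow> vec \<Rightarrow> vec" where
  "aW s F = (\<lambda>(n, x). if x < s ^ n \<and> n \<ge> 1 then F (n - 1, x mod s ^ (n - 1)) else 0)"

definition bW :: "nat \<Rightarrow> vec \<Rightarrow> vec" where
  "bW s F = (\<lambda>(n, x). if x < s ^ n
                      then (\<Sum>j<s. F (n + 1, x + j * s ^ n)) / of_nat s else 0)"

definition femb :: "nat \<Rightarrow> ((nat \<Rightarrow> nat) \<Rightarrow> complex) \<Rightarrow> vec" where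
  "femb s f = (\<lambda>(n, x). if x < s ^ n then f (emb s x) else 0)"

definition Fcal :: "nat \<Rightarrow> vec set" where
  "Fcal s = {F. (\<forall>v. v \<notin> V s \<longrightarrow> F v = 0) \<and>
     (\<exists>f \<in> Cont s. (\<lambda>n. SUP x\<in>{..<s ^ n}. cmod (F (n, x) - f (emb s x))) \<longlonglongrightarrow> 0)}"

definition fun_cstar :: "nat \<Rightarrow> vec set \<Rightarrow> bool" where
  "fun_cstar s B \<longleftrightarrow>
     B \<subseteq> {F. (\<forall>v. v \<notin> V s \<longrightarrow> F v = 0) \<and> bounded (range F)}
     \<and> (\<lambda>v. 0) \<in> B
     \<and> (\<forall>F\<in>B. \<forall>G\<in>B. (\<lambda>v. F v + G v) \<in> B \<and> (\<lambda>v. F v * G v) \<in> B)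
     \<and> (\<forall>F\<in>B. \<forall>c. (\<lambda>v. c * F v) \<in> B)
     \<and> (\<forall>F\<in>B. (\<lambda>v. cnj (F v)) \<in> B)
     \<and> (\<forall>Fs F. (\<forall>k. Fs k \<in> B) \<and> uniform_limit UNIV Fs F sequentially \<longrightarrow> F \<in> B)"

definition admissible :: "nat \<Rightarrow> vec set \<Rightarrow> bool" where
  "admissible s B \<longleftrightarrow> fun_cstar s B
     \<and> (\<forall>f\<in>Cont s. femb s f \<in> B)
     \<and> (\<forall>F\<in>B. aW s F \<in> B \<and> bW s F \<in> B)"

end

theory Submission
  imports Defs
begin


lemma pow_pos_s: "(2::nat) \<le> s \<Longrightarrow> 0 < s ^ n" by simp

lemma lt_pow_Suc:
  fixes s x j n :: nat
  assumes "x < s ^ n" "j < s"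
  shows "x + j * s ^ n < s ^ Suc n"
proof -
  have "x + j * s ^ n < s ^ n + j * s ^ n" using assms by simp
  also have "\<dots> = (j + 1) * s ^ n" by simp
  also have "\<dots> \<le> s * s ^ n" using assms(2) by (intro mult_right_mono) auto
  finally show ?thesis by simp
qed

lemma mod_add_pow: "x < s ^ n \<Longrightarrow> (x + j * s ^ n) mod s ^ n = (x::nat)"
  by simp

lemma div_add_pow: "x < s ^ n \<Longrightarrow> (x + j * s ^ n) div s ^ n = (j::nat)"
proof -
  assume a: "x < s ^ n"
  then have "s ^ n > 0" by (rule le_less_trans[OF le0])
  then show ?thesis using a by simp
qed

lemma decomp_pow:
  fixes y s n :: nat
  assumes "0 < s" "y < s ^ Suc n"
  shows "y = y mod s ^ n + (y div s ^ n) * s ^ n" "y div s ^ n < s" "y mod s ^ n < s ^ n"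
proof -
  show "y = y mod s ^ n + (y div s ^ n) * s ^ n" using mod_div_mult_eq[of y "s^n"] by simp
  show "y div s ^ n < s" using assms by (simp add: div_less_iff_less_mult mult.commute)
  show "y mod s ^ n < s ^ n" using assms by simp
qed

lemma Zs_mod:
  assumes "a \<in> Zs s" "i \<le> N"
  shows "a N mod s ^ i = a i"
  using assms(2)
proof (induction N)
  case 0
  have "\<forall>n. a n < s ^ n" using assms(1) by (simp add: Zs_def)
  then have "a 0 < s ^ 0" by blast
  then have "a 0 < 1" by simp
  then show ?case using 0 by simp
next
  case (Suc N)
  show ?case
  proof (cases "i = Suc N")
    case True
    have "\<forall>n. a n < s ^ n" using assms(1) by (simp add: Zs_def)
    then have "a (Suc N) < s ^ Suc N" by blast
    then show ?thesis using True by simp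
  next
    case False
    then have "i \<le> N" using Suc by simp
    have d: "s ^ i dvd s ^ N" using \<open>i \<le> N\<close> by (simp add: le_imp_power_dvd)
    have "a (Suc N) mod s ^ i = (a (Suc N) mod s ^ N) mod s ^ i"
      using d by (simp add: mod_mod_cancel)
    also have "\<dots> = a N mod s ^ i" using assms(1) by (simp add: Zs_def)
    finally show ?thesis using Suc.IH \<open>i \<le> N\<close> by simp
  qed
qed

lemma Zs_agree:
  assumes "a \<in> Zs s" "b \<in> Zs s" "a N = b N" "i \<le> N"
  shows "a i = b i"
  using Zs_mod[OF assms(1) assms(4)] Zs_mod[OF assms(2) assms(4)] assms(3) by simp

lemma emb_apply: "emb s x n = x mod s ^ n" by (simp add: emb_def)

lemma emb_Zs: "0 < s \<Longrightarrow> emb s x \<in> Zs s"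
proof -
  assume "0 < s"
  have "x mod s ^ Suc n mod s ^ n = x mod s ^ n" for n
    by (simp add: le_imp_power_dvd mod_mod_cancel)
  then show ?thesis using \<open>0<s\<close> by (simp add: Zs_def emb_def)
qed

lemma emb_agree: "x mod s ^ N = y mod s ^ N \<Longrightarrow> emb s x N = emb s y N"
  by (simp add: emb_def)

lemma tri: "norm (a - b) \<le> norm (a - c) + norm (b - (c::'a::real_normed_vector))"
  using norm_triangle_ineq4[of "a-c" "b-c"] by simp

lemma open_coord_eq: "open {b::nat\<Rightarrow>nat. b N = c}"
proof -
  have "{b::nat\<Rightarrow>nat. b N = c} = (\<lambda>b. b N) -` {c}" by auto
  moreover have "open ((\<lambda>b::nat\<Rightarrow>nat. b N) -` {c})"
    by (rule open_vimage) (auto simp: open_discrete)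
  ultimately show ?thesis by simp
qed

lemma compact_Zs: "compact (Zs s)"
proof -
  have c1: "compact (PiE UNIV (\<lambda>n::nat. {..<s ^ n}))"
  proof -
    have "compactin (product_topology (\<lambda>i. euclidean) UNIV) (PiE UNIV (\<lambda>n::nat. {..<s ^ n}))"
      apply (subst compactin_PiE)
      apply (rule disjI2)
      apply (simp add: compactin_euclidean_iff finite_imp_compact)
      done
    then show ?thesis by (simp add: euclidean_product_topology compactin_euclidean_iff)
  qed
  have c2: "closed (\<Inter>n. {a::nat\<Rightarrow>nat. a (Suc n) mod s ^ n = a n})"
  proof (intro closed_INT ballI)
    fix n
    have "continuous_on UNIV (\<lambda>a::nat\<Rightarrow>nat. a (Suc n) mod s ^ n)"
      using continuous_on_compose[OF continuous_on_product_coordinates[of "Suc n"]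
          Topological_Spaces.continuous_on_discrete]
      by (simp add: o_def)
    then show "closed {a::nat\<Rightarrow>nat. a (Suc n) mod s ^ n = a n}"
      by (intro closed_Collect_eq) auto
  qed
  have "Zs s = PiE UNIV (\<lambda>n::nat. {..<s ^ n}) \<inter> (\<Inter>n. {a::nat\<Rightarrow>nat. a (Suc n) mod s ^ n = a n})"
    by (auto simp: Zs_def PiE_def extensional_def)
  then show ?thesis using c1 c2 by (simp add: compact_Int_closed)
qed

lemma Cont_bounded:
  assumes "f \<in> Cont s"
  obtains M where "M \<ge> 0" "\<And>a. a \<in> Zs s \<Longrightarrow> cmod (f a) \<le> M"
proof -
  have "compact (f ` Zs s)" using assms compact_Zs
    by (auto simp: Cont_def intro: compact_continuous_image)
  then have "bounded (f ` Zs s)" by (rule compact_imp_bounded)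
  then obtain M where "\<forall>y\<in>f ` Zs s. norm y \<le> M" by (auto simp: bounded_iff)
  then have "\<And>a. a \<in> Zs s \<Longrightarrow> cmod (f a) \<le> max M 0" by fastforce
  then show ?thesis using that[of "max M 0"] by simp
qed

lemma Cont_local:
  assumes "f \<in> Cont s" "a \<in> Zs s" "e > 0"
  shows "\<exists>N. \<forall>b\<in>Zs s. b N = a N \<longrightarrow> cmod (f b - f a) < e"
proof -
  have "continuous_on (Zs s) f" using assms by (simp add: Cont_def)
  then obtain A where A: "open A" "a \<in> A" "\<forall>y\<in>Zs s. y \<in> A \<longrightarrow> f y \<in> ball (f a) e"
    using assms(2,3) unfolding continuous_on_topological by (metis centre_in_ball open_ball)
  from A(1) have "openin (product_topology (\<lambda>i. euclidean) UNIV) A" by (simp add: open_fun_def)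
  from product_topology_open_contains_basis[OF this A(2)] obtain X where
    X: "a \<in> PiE UNIV X" "\<forall>i. openin euclidean (X i)" "finite {i. X i \<noteq> topspace euclidean}"
       "PiE UNIV X \<subseteq> A" by auto
  define N where "N = Max (insert 0 {i. X i \<noteq> UNIV})"
  have fin: "finite (insert 0 {i. X i \<noteq> UNIV})" using X(3) by simp
  show ?thesis
  proof (intro exI ballI impI)
    fix b assume b: "b \<in> Zs s" "b N = a N"
    have "b \<in> PiE UNIV X"
    proof -
      have "b i \<in> X i" for i
      proof (cases "X i = UNIV")
        case True then show ?thesis by simp
      next
        case False
        then have "i \<le> N" unfolding N_def using fin by (intro Max_ge) auto
        then have "b i = a i" using Zs_agree[OF b(1) assms(2) b(2)] by simp
        then show ?thesis using X(1) by (auto simp: PiE_def Pi_def)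
      qed
      then show ?thesis by (auto simp: PiE_def Pi_def extensional_def)
    qed
    then have "f b \<in> ball (f a) e" using A(3) X(4) b(1) by auto
    then show "cmod (f b - f a) < e" by (simp add: dist_norm norm_minus_commute)
  qed
qed

lemma Cont_unif:
  assumes "f \<in> Cont s" "e > 0"
  shows "\<exists>N. \<forall>a\<in>Zs s. \<forall>b\<in>Zs s. a N = b N \<longrightarrow> cmod (f a - f b) < e"
proof -
  have "\<forall>a\<in>Zs s. \<exists>N. \<forall>b\<in>Zs s. b N = a N \<longrightarrow> cmod (f b - f a) < e/2"
    using Cont_local[OF assms(1) _ half_gt_zero[OF assms(2)]] by blast
  then obtain Nf where Nf0: "\<forall>a\<in>Zs s. \<forall>b\<in>Zs s. b (Nf a) = a (Nf a) \<longrightarrow> cmod (f b - f a) < e/2"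
    by (rule bchoice[elim_format]) blast
  then have Nf: "\<And>a b. a \<in> Zs s \<Longrightarrow> b \<in> Zs s \<Longrightarrow> b (Nf a) = a (Nf a) \<Longrightarrow> cmod (f b - f a) < e/2"
    by blast
  have cov: "Zs s \<subseteq> (\<Union>a\<in>Zs s. {b. b (Nf a) = a (Nf a)})" by auto
  obtain D where D: "D \<subseteq> Zs s" "finite D" "Zs s \<subseteq> (\<Union>a\<in>D. {b. b (Nf a) = a (Nf a)})"
  proof (rule compactE_image[OF compact_Zs, of "Zs s" "\<lambda>a. {b. b (Nf a) = a (Nf a)}"])
    show "\<And>a. a \<in> Zs s \<Longrightarrow> open {b. b (Nf a) = a (Nf a)}" by (rule open_coord_eq)
    show "Zs s \<subseteq> (\<Union>a\<in>Zs s. {b. b (Nf a) = a (Nf a)})" by (rule cov)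
  qed (blast intro: that)
  define N where "N = Max (insert 0 (Nf ` D))"
  show ?thesis
  proof (intro exI ballI impI)
    fix a b assume ab: "a \<in> Zs s" "b \<in> Zs s" "a N = b N"
    obtain c where c: "c \<in> D" "a (Nf c) = c (Nf c)" using D(3) ab(1) by auto
    have "Nf c \<le> N" unfolding N_def using D(2) c(1) by (intro Max_ge) auto
    then have "b (Nf c) = a (Nf c)" using Zs_agree[OF ab(2) ab(1)] ab(3) by metis
    have cZ: "c \<in> Zs s" using c D(1) by auto
    have "cmod (f a - f c) < e/2" using Nf[OF cZ ab(1) c(2)] .
    moreover have "cmod (f b - f c) < e/2" using Nf[OF cZ ab(2)] c(2) \<open>b (Nf c) = a (Nf c)\<close> by simp
    ultimately have "cmod (f a - f c) + cmod (f b - f c) < e" by simp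
    moreover have "cmod (f a - f b) \<le> cmod (f a - f c) + cmod (f b - f c)"
      by (rule tri)
    ultimately show "cmod (f a - f b) < e" by linarith
  qed
qed



definition conv :: "nat \<Rightarrow> vec \<Rightarrow> ((nat \<Rightarrow> nat) \<Rightarrow> complex) \<Rightarrow> bool" where
  "conv s F f \<longleftrightarrow> (\<forall>e>0. \<exists>N. \<forall>n\<ge>N. \<forall>x<s ^ n. cmod (F (n, x) - f (emb s x)) \<le> e)"

lemma SUP_conv:
  assumes "0 < s"
  shows "(\<lambda>n. SUP x\<in>{..<s ^ n}. cmod (F (n, x) - f (emb s x))) \<longlonglongrightarrow> 0 \<longleftrightarrow> conv s F f"
proof -
  define u where "u n = (SUP x\<in>{..<s ^ n}. cmod (F (n, x) - f (emb s x)))" for n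
  have ne: "{..<s ^ n} \<noteq> {}" for n using assms by (simp add: lessThan_empty_iff)
  have up: "x < s ^ n \<Longrightarrow> cmod (F (n, x) - f (emb s x)) \<le> u n" for n x
    unfolding u_def by (rule cSUP_upper) auto
  have le: "(\<And>x. x < s ^ n \<Longrightarrow> cmod (F (n, x) - f (emb s x)) \<le> e) \<Longrightarrow> u n \<le> e" for n e
    unfolding u_def using ne by (intro cSUP_least) auto
  have nn: "0 \<le> u n" for n using up[of 0 n] assms by (meson norm_ge_zero order_trans zero_less_power)
  show ?thesis
  proof
    assume "(\<lambda>n. SUP x\<in>{..<s ^ n}. cmod (F (n, x) - f (emb s x))) \<longlonglongrightarrow> 0"
    then have L: "u \<longlonglongrightarrow> 0" unfolding u_def by simp
    show "conv s F f" unfolding conv_def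
    proof (intro allI impI)
      fix e :: real assume "e > 0"
      from L[unfolded LIMSEQ_iff] \<open>e>0\<close> obtain N where "\<forall>n\<ge>N. norm (u n - 0) < e" by blast
      then have "\<forall>n\<ge>N. u n < e" by auto
      then show "\<exists>N. \<forall>n\<ge>N. \<forall>x<s ^ n. cmod (F (n, x) - f (emb s x)) \<le> e"
        using up by (meson less_eq_real_def order_trans)
    qed
  next
    assume c: "conv s F f"
    have "u \<longlonglongrightarrow> 0" unfolding LIMSEQ_iff
    proof (intro allI impI)
      fix r :: real assume "r > 0"
      then obtain N where N: "\<forall>n\<ge>N. \<forall>x<s ^ n. cmod (F (n, x) - f (emb s x)) \<le> r/2"
        using c unfolding conv_def by (meson half_gt_zero)
      have "norm (u n - 0) < r" if "n \<ge> N" for n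
      proof -
        have "u n \<le> r/2" using N that by (intro le) auto
        then show ?thesis using nn[of n] \<open>r>0\<close> by simp
      qed
      then show "\<exists>N. \<forall>n\<ge>N. norm (u n - 0) < r" by blast
    qed
    then show "(\<lambda>n. SUP x\<in>{..<s ^ n}. cmod (F (n, x) - f (emb s x))) \<longlonglongrightarrow> 0"
      unfolding u_def by simp
  qed
qed

lemma inV[simp]: "(n, x) \<in> V s \<longleftrightarrow> x < s ^ n" by (simp add: V_def)

lemma Fcal_iff:
  assumes "0 < s"
  shows "F \<in> Fcal s \<longleftrightarrow> (\<forall>n x. \<not> x < s ^ n \<longrightarrow> F (n, x) = 0) \<and> (\<exists>f\<in>Cont s. conv s F f)"
  unfolding Fcal_def using SUP_conv[OF assms] by (auto simp: V_def)

lemma FcalI: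
  assumes "0 < s" "\<And>n x. \<not> x < s ^ n \<Longrightarrow> F (n, x) = 0" "f \<in> Cont s" "conv s F f"
  shows "F \<in> Fcal s"
  using assms Fcal_iff by blast

lemma FcalE:
  assumes "0 < s" "F \<in> Fcal s"
  obtains f where "\<And>n x. \<not> x < s ^ n \<Longrightarrow> F (n, x) = 0" "f \<in> Cont s" "conv s F f"
  using assms Fcal_iff by blast

lemma conv_bounded:
  assumes "0 < s" "\<And>n x. \<not> x < s ^ n \<Longrightarrow> F (n, x) = 0" "f \<in> Cont s" "conv s F f"
  shows "\<exists>C\<ge>0. \<forall>v. cmod (F v) \<le> C"
proof -
  obtain M where M: "M \<ge> 0" "\<And>a. a \<in> Zs s \<Longrightarrow> cmod (f a) \<le> M" using Cont_bounded[OF assms(3)] by blast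
  obtain N where N: "\<forall>n\<ge>N. \<forall>x<s ^ n. cmod (F (n, x) - f (emb s x)) \<le> 1"
    using assms(4) unfolding conv_def by (meson zero_less_one)
  define S where "S = {..<N} \<times> {..<s ^ N}"
  have finS: "finite S" by (simp add: S_def)
  define C where "C = M + 1 + (\<Sum>v\<in>S. cmod (F v))"
  have S0: "0 \<le> (\<Sum>v\<in>S. cmod (F v))" by (simp add: sum_nonneg)
  have "cmod (F v) \<le> C" for v
  proof (cases v)
    case (Pair n x)
    show ?thesis
    proof (cases "x < s ^ n")
      case False then show ?thesis using assms(2) Pair M S0 by (simp add: C_def)
    next
      case True
      show ?thesis
      proof (cases "n < N")
        case True
        have "s ^ n \<le> s ^ N" using assms(1) \<open>n<N\<close> by (simp add: power_increasing)
        then have "v \<in> S" using Pair True \<open>x < s^n\<close> by (auto simp: S_def)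
        then have "cmod (F v) \<le> (\<Sum>v\<in>S. cmod (F v))" using finS by (intro member_le_sum) auto
        then show ?thesis using M by (simp add: C_def)
      next
        case False
        then have "cmod (F (n,x) - f (emb s x)) \<le> 1" using N \<open>x < s^n\<close> by simp
        moreover have "cmod (f (emb s x)) \<le> M" using M emb_Zs[OF assms(1)] by blast
        ultimately have "cmod (F (n,x)) \<le> M + 1"
          using norm_triangle_ineq2[of "F (n,x)" "f (emb s x)"] by linarith
        then show ?thesis using Pair S0 by (simp add: C_def)
      qed
    qed
  qed
  moreover have "C \<ge> 0" using M S0 by (simp add: C_def)
  ultimately show ?thesis by blast
qed

lemma Fcal_bounded:
  assumes "0 < s" "F \<in> Fcal s"
  shows "\<exists>C\<ge>0. \<forall>v. cmod (F v) \<le> C"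
proof -
  obtain f where "\<And>n x. \<not> x < s ^ n \<Longrightarrow> F (n, x) = 0" "f \<in> Cont s" "conv s F f"
    using FcalE[OF assms] by blast
  then show ?thesis using conv_bounded[OF assms(1)] by blast
qed

lemma femb_Fcal:
  assumes "0 < s" "f \<in> Cont s"
  shows "femb s f \<in> Fcal s"
  by (rule FcalI[OF assms(1) _ assms(2)]) (auto simp: femb_def conv_def)

lemma conv_add:
  assumes "conv s F f" "conv s G g"
  shows "conv s (\<lambda>v. F v + G v) (\<lambda>a. f a + g a)"
  unfolding conv_def
proof (intro allI impI)
  fix e :: real assume "e > 0"
  obtain N1 where N1: "\<forall>n\<ge>N1. \<forall>x<s ^ n. cmod (F (n, x) - f (emb s x)) \<le> e/2"
    using assms(1) \<open>e>0\<close> unfolding conv_def by (meson half_gt_zero)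
  obtain N2 where N2: "\<forall>n\<ge>N2. \<forall>x<s ^ n. cmod (G (n, x) - g (emb s x)) \<le> e/2"
    using assms(2) \<open>e>0\<close> unfolding conv_def by (meson half_gt_zero)
  show "\<exists>N. \<forall>n\<ge>N. \<forall>x<s ^ n. cmod (F (n, x) + G (n, x) - (f (emb s x) + g (emb s x))) \<le> e"
  proof (intro exI allI impI)
    fix n x assume "max N1 N2 \<le> n" "x < s ^ n"
    then have "cmod (F (n, x) - f (emb s x)) \<le> e/2" "cmod (G (n, x) - g (emb s x)) \<le> e/2"
      using N1 N2 by auto
    moreover have "cmod (F (n, x) + G (n, x) - (f (emb s x) + g (emb s x))) \<le>
        cmod (F (n, x) - f (emb s x)) + cmod (G (n, x) - g (emb s x))"
      using norm_triangle_ineq[of "F (n, x) - f (emb s x)" "G (n, x) - g (emb s x)"]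
      by (simp add: algebra_simps)
    ultimately show "cmod (F (n, x) + G (n, x) - (f (emb s x) + g (emb s x))) \<le> e" by linarith
  qed
qed

lemma conv_cmult:
  assumes "conv s F f"
  shows "conv s (\<lambda>v. c * F v) (\<lambda>a. c * f a)"
  unfolding conv_def
proof (intro allI impI)
  fix e :: real assume "e > 0"
  obtain N where N: "\<forall>n\<ge>N. \<forall>x<s ^ n. cmod (F (n, x) - f (emb s x)) \<le> e / (cmod c + 1)"
  proof -
    have "e / (cmod c + 1) > 0" using \<open>e>0\<close> by (simp add: add_nonneg_pos)
    then show ?thesis using assms that unfolding conv_def by blast
  qed
  show "\<exists>N. \<forall>n\<ge>N. \<forall>x<s ^ n. cmod (c * F (n, x) - c * f (emb s x)) \<le> e"
  proof (intro exI allI impI)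
    fix n x assume "N \<le> n" "x < s ^ n"
    then have h: "cmod (F (n, x) - f (emb s x)) \<le> e / (cmod c + 1)" using N by auto
    have "cmod (c * F (n, x) - c * f (emb s x)) = cmod c * cmod (F (n, x) - f (emb s x))"
      by (simp add: right_diff_distrib[symmetric] norm_mult)
    also have "\<dots> \<le> (cmod c + 1) * (e / (cmod c + 1))"
      using h by (intro mult_mono) auto
    also have "\<dots> = e"
    proof -
      have nz: "cmod c + 1 \<noteq> 0" using norm_ge_zero[of c] by linarith
      show ?thesis using nz by simp
    qed
    finally show "cmod (c * F (n, x) - c * f (emb s x)) \<le> e" .
  qed
qed

lemma conv_cnj:
  assumes "conv s F f"
  shows "conv s (\<lambda>v. cnj (F v)) (\<lambda>a. cnj (f a))"
proof -
  have "cmod (cnj a - cnj b) = cmod (a - b)" for a b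
    by (metis complex_cnj_diff complex_mod_cnj)
  then show ?thesis using assms unfolding conv_def by simp
qed

lemma conv_mult:
  assumes "0 < s" "conv s F f" "conv s G g" "f \<in> Cont s" "g \<in> Cont s"
    and "\<And>n x. \<not> x < s ^ n \<Longrightarrow> F (n, x) = 0"
  shows "conv s (\<lambda>v. F v * G v) (\<lambda>a. f a * g a)"
  unfolding conv_def
proof (intro allI impI)
  fix e :: real assume "e > 0"
  obtain CF where CF: "CF \<ge> 0" "\<forall>v. cmod (F v) \<le> CF" using conv_bounded[OF assms(1) assms(6) assms(4,2)] by blast
  obtain M where M: "M \<ge> 0" "\<And>a. a \<in> Zs s \<Longrightarrow> cmod (g a) \<le> M" using Cont_bounded[OF assms(5)] by blast
  define e1 where "e1 = e / (CF + M + 1)"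
  have e1: "e1 > 0" using CF M \<open>e>0\<close> by (simp add: e1_def)
  obtain N1 where N1: "\<forall>n\<ge>N1. \<forall>x<s ^ n. cmod (F (n, x) - f (emb s x)) \<le> e1"
    using assms(2) e1 unfolding conv_def by blast
  obtain N2 where N2: "\<forall>n\<ge>N2. \<forall>x<s ^ n. cmod (G (n, x) - g (emb s x)) \<le> e1"
    using assms(3) e1 unfolding conv_def by blast
  show "\<exists>N. \<forall>n\<ge>N. \<forall>x<s ^ n. cmod (F (n, x) * G (n, x) - f (emb s x) * g (emb s x)) \<le> e"
  proof (intro exI allI impI)
    fix n x assume nx: "max N1 N2 \<le> n" "x < s ^ n"
    define a where "a = F (n, x)" define b where "b = G (n,x)"
    define p where "p = f (emb s x)" define q where "q = g (emb s x)"
    have h1: "cmod (a - p) \<le> e1" "cmod (b - q) \<le> e1" using N1 N2 nx by (auto simp: a_def b_def p_def q_def)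
    have ha: "cmod a \<le> CF" using CF by (simp add: a_def)
    have hq: "cmod q \<le> M" using M emb_Zs[OF assms(1)] by (simp add: q_def)
    have "a * b - p * q = a * (b - q) + q * (a - p)" by (simp add: algebra_simps)
    then have "cmod (a * b - p * q) \<le> cmod a * cmod (b - q) + cmod q * cmod (a - p)"
      using norm_triangle_ineq[of "a * (b - q)" "q * (a - p)"] by (simp add: norm_mult)
    also have "\<dots> \<le> CF * e1 + M * e1"
      using h1 ha hq CF M by (intro add_mono mult_mono) auto
    also have "\<dots> \<le> (CF + M + 1) * e1" using e1 by (simp add: algebra_simps)
    also have "\<dots> = e" using CF M by (simp add: e1_def)
    finally show "cmod (F (n, x) * G (n, x) - f (emb s x) * g (emb s x)) \<le> e"
      by (simp add: a_def b_def p_def q_def)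
  qed
qed



lemma tri5: "norm (a+b+c+d+e) \<le> norm a + norm b + norm c + norm d + norm (e::'a::real_normed_vector)"
proof -
  have "norm (a+b+c+d+e) \<le> norm (a+b+c+d) + norm e" by (rule norm_triangle_ineq)
  moreover have "norm (a+b+c+d) \<le> norm (a+b+c) + norm d" by (rule norm_triangle_ineq)
  moreover have "norm (a+b+c) \<le> norm (a+b) + norm c" by (rule norm_triangle_ineq)
  moreover have "norm (a+b) \<le> norm a + norm b" by (rule norm_triangle_ineq)
  ultimately show ?thesis by linarith
qed

lemma tri3: "norm (a+b+c) \<le> norm a + norm b + norm (c::'a::real_normed_vector)"
proof -
  have "norm (a+b+c) \<le> norm (a+b) + norm c" by (rule norm_triangle_ineq)
  moreover have "norm (a+b) \<le> norm a + norm b" by (rule norm_triangle_ineq)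
  ultimately show ?thesis by linarith
qed

lemma conv_aW:
  assumes "0 < s" "f \<in> Cont s" "conv s F f"
  shows "conv s (aW s F) f"
  unfolding conv_def
proof (intro allI impI)
  fix e :: real assume "e > 0"
  obtain N0 where N0: "\<forall>a\<in>Zs s. \<forall>b\<in>Zs s. a N0 = b N0 \<longrightarrow> cmod (f a - f b) < e/2"
    using Cont_unif[OF assms(2)] \<open>e>0\<close> by (meson half_gt_zero)
  obtain N1 where N1: "\<forall>n\<ge>N1. \<forall>x<s ^ n. cmod (F (n, x) - f (emb s x)) \<le> e/2"
    using assms(3) \<open>e>0\<close> unfolding conv_def by (meson half_gt_zero)
  show "\<exists>N. \<forall>n\<ge>N. \<forall>x<s ^ n. cmod (aW s F (n, x) - f (emb s x)) \<le> e"
  proof (intro exI allI impI)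
    fix n x assume nx: "Suc (max N0 N1) \<le> n" "x < s ^ n"
    then obtain m where m: "n = Suc m" "max N0 N1 \<le> m" by (cases n) auto
    define x' where "x' = x mod s ^ m"
    have x': "x' < s ^ m" using assms(1) by (simp add: x'_def)
    have aw: "aW s F (n, x) = F (m, x')" using nx m by (simp add: aW_def x'_def)
    have h1: "cmod (F (m, x') - f (emb s x')) \<le> e/2" using N1 m x' by auto
    have "emb s x' N0 = emb s x N0"
    proof -
      have "s ^ N0 dvd s ^ m" using m by (simp add: le_imp_power_dvd)
      then show ?thesis by (simp add: emb_def x'_def mod_mod_cancel)
    qed
    then have h2: "cmod (f (emb s x') - f (emb s x)) < e/2" using N0 emb_Zs[OF assms(1)] by blast
    have "cmod (F (m, x') - f (emb s x)) \<le> cmod (F (m, x') - f (emb s x')) + cmod (f (emb s x') - f (emb s x))"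
      using norm_triangle_ineq[of "F (m, x') - f (emb s x')" "f (emb s x') - f (emb s x)"] by simp
    then show "cmod (aW s F (n, x) - f (emb s x)) \<le> e" unfolding aw using h1 h2 by linarith
  qed
qed

lemma avg_bound:
  fixes a :: "nat \<Rightarrow> complex"
  assumes "0 < s" "\<And>j. j < s \<Longrightarrow> cmod (a j - c) \<le> e"
  shows "cmod ((\<Sum>j<s. a j) / of_nat s - c) \<le> e"
proof -
  have "(\<Sum>j<s. a j) / of_nat s - c = (\<Sum>j<s. (a j - c)) / of_nat s"
    using assms(1) by (simp add: sum_subtractf field_simps)
  also have "cmod \<dots> = cmod (\<Sum>j<s. (a j - c)) / real s" by (simp add: norm_divide)
  also have "\<dots> \<le> (\<Sum>j<s. cmod (a j - c)) / real s"
    using assms(1) by (intro divide_right_mono norm_sum) auto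
  also have "\<dots> \<le> (\<Sum>j<s. e) / real s"
    using assms by (intro divide_right_mono sum_mono) auto
  also have "\<dots> = e" using assms(1) by simp
  finally show ?thesis .
qed

lemma conv_bW:
  assumes "0 < s" "f \<in> Cont s" "conv s F f"
  shows "conv s (bW s F) f"
  unfolding conv_def
proof (intro allI impI)
  fix e :: real assume "e > 0"
  obtain N0 where N0: "\<forall>a\<in>Zs s. \<forall>b\<in>Zs s. a N0 = b N0 \<longrightarrow> cmod (f a - f b) < e/2"
    using Cont_unif[OF assms(2)] \<open>e>0\<close> by (meson half_gt_zero)
  obtain N1 where N1: "\<forall>n\<ge>N1. \<forall>x<s ^ n. cmod (F (n, x) - f (emb s x)) \<le> e/2"
    using assms(3) \<open>e>0\<close> unfolding conv_def by (meson half_gt_zero)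
  show "\<exists>N. \<forall>n\<ge>N. \<forall>x<s ^ n. cmod (bW s F (n, x) - f (emb s x)) \<le> e"
  proof (intro exI allI impI)
    fix n x assume nx: "max N0 N1 \<le> n" "x < s ^ n"
    have bw: "bW s F (n, x) = (\<Sum>j<s. F (n + 1, x + j * s ^ n)) / of_nat s" using nx by (simp add: bW_def)
    have "cmod (F (n + 1, x + j * s ^ n) - f (emb s x)) \<le> e" if "j < s" for j
    proof -
      define y where "y = x + j * s ^ n"
      have y: "y < s ^ Suc n" using lt_pow_Suc[OF nx(2) that] by (simp add: y_def)
      have h1: "cmod (F (n+1, y) - f (emb s y)) \<le> e/2" using N1 nx y by auto
      have "emb s y N0 = emb s x N0"
      proof -
        have d: "s ^ N0 dvd s ^ n" using nx by (simp add: le_imp_power_dvd)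
        have "y mod s ^ N0 = (y mod s ^ n) mod s ^ N0" using d by (simp add: mod_mod_cancel)
        also have "y mod s ^ n = x" using nx(2) by (simp add: y_def)
        finally show ?thesis by (simp add: emb_def)
      qed
      then have h2: "cmod (f (emb s y) - f (emb s x)) < e/2" using N0 emb_Zs[OF assms(1)] by blast
      have "cmod (F (n+1, y) - f (emb s x)) \<le> cmod (F (n+1, y) - f (emb s y)) + cmod (f (emb s y) - f (emb s x))"
        using norm_triangle_ineq[of "F (n+1, y) - f (emb s y)" "f (emb s y) - f (emb s x)"] by simp
      then show ?thesis using h1 h2 by (simp add: y_def)
    qed
    then show "cmod (bW s F (n, x) - f (emb s x)) \<le> e" unfolding bw
      by (intro avg_bound assms(1))
  qed
qed

lemma Fcal_ulim:
  assumes s: "0 < s" and Fs: "\<And>k. Fs k \<in> Fcal s" and U: "uniform_limit UNIV Fs F sequentially"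
  shows "F \<in> Fcal s"
proof -
  have "\<forall>k. \<exists>f. (\<forall>n x. \<not> x < s ^ n \<longrightarrow> Fs k (n, x) = 0) \<and> f \<in> Cont s \<and> conv s (Fs k) f"
    using FcalE[OF s Fs] by metis
  then obtain fs where fs: "\<And>k. (\<forall>n x. \<not> x < s ^ n \<longrightarrow> Fs k (n, x) = 0)" "\<And>k. fs k \<in> Cont s"
      "\<And>k. conv s (Fs k) (fs k)"
    by metis
  have U': "\<exists>K. \<forall>k\<ge>K. \<forall>v. cmod (Fs k v - F v) < e" if "e > 0" for e
  proof -
    have "\<forall>\<^sub>F k in sequentially. \<forall>v\<in>UNIV. dist (Fs k v) (F v) < e"
      using U that unfolding uniform_limit_iff by blast
    then show ?thesis unfolding eventually_sequentially by (auto simp: dist_norm)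
  qed
  have van: "F (n, x) = 0" if "\<not> x < s ^ n" for n x
  proof (rule ccontr)
    assume "F (n, x) \<noteq> 0"
    then have "cmod (F (n, x)) > 0" by simp
    then obtain K where "\<forall>k\<ge>K. \<forall>v. cmod (Fs k v - F v) < cmod (F (n, x))" using U' by blast
    then have "cmod (Fs K (n, x) - F (n, x)) < cmod (F (n, x))" by blast
    then show False using fs(1) that by simp
  qed
  have cauchy: "\<forall>e>0. \<exists>N. \<forall>m n a. N \<le> m \<and> N \<le> n \<and> a \<in> Zs s \<longrightarrow> dist (fs m a) (fs n a) < e"
  proof (intro allI impI)
    fix e :: real assume e: "e > 0"
    obtain K where K: "\<forall>k\<ge>K. \<forall>v. cmod (Fs k v - F v) < e/4" using U' e by (meson zero_less_divide_iff zero_less_numeral)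
    show "\<exists>N. \<forall>m n a. N \<le> m \<and> N \<le> n \<and> a \<in> Zs s \<longrightarrow> dist (fs m a) (fs n a) < e"
    proof (intro exI allI impI)
      fix k l a assume kla: "K \<le> k \<and> K \<le> l \<and> a \<in> Zs s"
      then have a: "a \<in> Zs s" by simp
      have e8: "e/8 > 0" using e by simp
      obtain N1 where N1: "\<forall>b\<in>Zs s. b N1 = a N1 \<longrightarrow> cmod (fs k b - fs k a) < e/8"
        using Cont_local[OF fs(2) a e8] by blast
      obtain N2 where N2: "\<forall>b\<in>Zs s. b N2 = a N2 \<longrightarrow> cmod (fs l b - fs l a) < e/8"
        using Cont_local[OF fs(2) a e8] by blast
      obtain N3 where N3: "\<forall>n\<ge>N3. \<forall>x<s ^ n. cmod (Fs k (n, x) - fs k (emb s x)) \<le> e/8"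
        using fs(3)[of k] e8 unfolding conv_def by blast
      obtain N4 where N4: "\<forall>n\<ge>N4. \<forall>x<s ^ n. cmod (Fs l (n, x) - fs l (emb s x)) \<le> e/8"
        using fs(3)[of l] e8 unfolding conv_def by blast
      define n where "n = max (max N1 N2) (max N3 N4)"
      define x where "x = a n"
      define b where "b = emb s x"
      have x: "x < s ^ n" using a by (simp add: Zs_def x_def)
      have b: "b \<in> Zs s" using emb_Zs[OF s] by (simp add: b_def)
      have bn: "b n = a n" using x by (simp add: b_def emb_def x_def)
      have "b N1 = a N1" using Zs_agree[OF b a bn] by (simp add: n_def)
      then have "cmod (fs k b - fs k a) < e/8" using N1 b by blast
      then have h1: "cmod (fs k a - fs k b) < e/8" by (simp add: norm_minus_commute)
      have "b N2 = a N2" using Zs_agree[OF b a bn] by (simp add: n_def)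
      then have h5: "cmod (fs l b - fs l a) < e/8" using N2 b by simp
      have "N3 \<le> n" "N4 \<le> n" by (simp_all add: n_def)
      then have "cmod (Fs k (n, x) - fs k b) \<le> e/8" "cmod (Fs l (n, x) - fs l b) \<le> e/8"
        using N3 N4 x unfolding b_def by blast+
      then have h2: "cmod (fs k b - Fs k (n, x)) \<le> e/8" and h4: "cmod (Fs l (n, x) - fs l b) \<le> e/8"
        by (simp_all add: norm_minus_commute)
      have h3: "cmod (Fs k (n, x) - Fs l (n, x)) < e/2"
      proof -
        have "cmod (Fs k (n, x) - F (n, x)) < e/4" "cmod (Fs l (n, x) - F (n, x)) < e/4" using K kla by auto
        moreover have "cmod (Fs k (n, x) - Fs l (n, x)) \<le> cmod (Fs k (n, x) - F (n, x)) + cmod (Fs l (n, x) - F (n, x))"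
          by (rule tri)
        ultimately show ?thesis by linarith
      qed
      have "fs k a - fs l a = (fs k a - fs k b) + (fs k b - Fs k (n, x)) + (Fs k (n, x) - Fs l (n, x))
          + (Fs l (n, x) - fs l b) + (fs l b - fs l a)" by simp
      then have "cmod (fs k a - fs l a) \<le> cmod (fs k a - fs k b) + cmod (fs k b - Fs k (n, x)) + cmod (Fs k (n, x) - Fs l (n, x))
          + cmod (Fs l (n, x) - fs l b) + cmod (fs l b - fs l a)" by (metis tri5)
      then show "dist (fs k a) (fs l a) < e" using h1 h2 h3 h4 h5 by (simp add: dist_norm)
    qed
  qed
  then obtain g where g: "\<forall>e>0. \<exists>N. \<forall>n a. N \<le> n \<and> a \<in> Zs s \<longrightarrow> dist (fs n a) (g a) < e"
    using uniformly_convergent_eq_cauchy[of "\<lambda>a. a \<in> Zs s" fs] by blast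
  have ul: "uniform_limit (Zs s) fs g sequentially"
    unfolding uniform_limit_iff eventually_sequentially using g by blast
  have gC: "g \<in> Cont s"
    using uniform_limit_theorem[OF _ ul] fs(2) by (auto simp: Cont_def)
  have "conv s F g" unfolding conv_def
  proof (intro allI impI)
    fix e :: real assume e: "e > 0"
    obtain K1 where K1: "\<forall>k\<ge>K1. \<forall>v. cmod (Fs k v - F v) < e/3" using U' e by (meson zero_less_divide_iff zero_less_numeral)
    obtain K2 where K2: "\<forall>n a. K2 \<le> n \<and> a \<in> Zs s \<longrightarrow> dist (fs n a) (g a) < e/3" using g e by (meson zero_less_divide_iff zero_less_numeral)
    define k where "k = max K1 K2"
    obtain N where N: "\<forall>n\<ge>N. \<forall>x<s ^ n. cmod (Fs k (n, x) - fs k (emb s x)) \<le> e/3"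
      using fs(3)[of k] e unfolding conv_def by (meson zero_less_divide_iff zero_less_numeral)
    show "\<exists>N. \<forall>n\<ge>N. \<forall>x<s ^ n. cmod (F (n, x) - g (emb s x)) \<le> e"
    proof (intro exI allI impI)
      fix n x assume nx: "N \<le> n" "x < s ^ n"
      have h1: "cmod (F (n, x) - Fs k (n, x)) < e/3" using K1 by (simp add: k_def norm_minus_commute)
      have h2: "cmod (Fs k (n, x) - fs k (emb s x)) \<le> e/3" using N nx by simp
      have h3: "cmod (fs k (emb s x) - g (emb s x)) < e/3" using K2 emb_Zs[OF s] by (simp add: k_def dist_norm)
      have "F (n, x) - g (emb s x) = (F (n, x) - Fs k (n, x)) + (Fs k (n, x) - fs k (emb s x)) + (fs k (emb s x) - g (emb s x))"
        by simp
      then have "cmod (F (n, x) - g (emb s x)) \<le> cmod (F (n, x) - Fs k (n, x)) + cmod (Fs k (n, x) - fs k (emb s x)) + cmod (fs k (emb s x) - g (emb s x))"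
        by (metis tri3)
      then show "cmod (F (n, x) - g (emb s x)) \<le> e" using h1 h2 h3 by linarith
    qed
  qed
  then show ?thesis using FcalI[OF s _ gC] van by blast
qed



lemma Fcal_admissible:
  assumes s: "0 < s"
  shows "admissible s (Fcal s)"
proof -
  have sub: "Fcal s \<subseteq> {F. (\<forall>v. v \<notin> V s \<longrightarrow> F v = 0) \<and> bounded (range F)}"
  proof
    fix F assume F: "F \<in> Fcal s"
    obtain C where C: "\<forall>v. cmod (F v) \<le> C" using Fcal_bounded[OF s F] by blast
    have "bounded (range F)" unfolding bounded_iff using C by blast
    moreover have "\<forall>v. v \<notin> V s \<longrightarrow> F v = 0" using F by (auto simp: Fcal_def)
    ultimately show "F \<in> {F. (\<forall>v. v \<notin> V s \<longrightarrow> F v = 0) \<and> bounded (range F)}" by blast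
  qed
  have zero: "(\<lambda>v. 0) \<in> Fcal s"
    by (rule FcalI[OF s, of _ "\<lambda>a. 0"]) (auto simp: Cont_def conv_def)
  have add: "(\<lambda>v. F v + G v) \<in> Fcal s" if F: "F \<in> Fcal s" and G: "G \<in> Fcal s" for F G
  proof -
    obtain f where f: "\<And>n x. \<not> x < s ^ n \<Longrightarrow> F (n, x) = 0" "f \<in> Cont s" "conv s F f" using FcalE[OF s F] by blast
    obtain g where g: "\<And>n x. \<not> x < s ^ n \<Longrightarrow> G (n, x) = 0" "g \<in> Cont s" "conv s G g" using FcalE[OF s G] by blast
    show ?thesis
      by (rule FcalI[OF s _ _ conv_add[OF f(3) g(3)]]) (use f g in \<open>auto simp: Cont_def intro: continuous_on_add\<close>)
  qed
  have mult: "(\<lambda>v. F v * G v) \<in> Fcal s" if F: "F \<in> Fcal s" and G: "G \<in> Fcal s" for F G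
  proof -
    obtain f where f: "\<And>n x. \<not> x < s ^ n \<Longrightarrow> F (n, x) = 0" "f \<in> Cont s" "conv s F f" using FcalE[OF s F] by blast
    obtain g where g: "\<And>n x. \<not> x < s ^ n \<Longrightarrow> G (n, x) = 0" "g \<in> Cont s" "conv s G g" using FcalE[OF s G] by blast
    show ?thesis
      by (rule FcalI[OF s _ _ conv_mult[OF s f(3) g(3) f(2) g(2) f(1)]]) (use f g in \<open>auto simp: Cont_def intro: continuous_on_mult\<close>)
  qed
  have cmult: "(\<lambda>v. c * F v) \<in> Fcal s" if F: "F \<in> Fcal s" for F c
  proof -
    obtain f where f: "\<And>n x. \<not> x < s ^ n \<Longrightarrow> F (n, x) = 0" "f \<in> Cont s" "conv s F f" using FcalE[OF s F] by blast
    show ?thesis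
      by (rule FcalI[OF s _ _ conv_cmult[OF f(3)]]) (use f in \<open>auto simp: Cont_def intro: continuous_on_mult continuous_on_const\<close>)
  qed
  have cnj: "(\<lambda>v. cnj (F v)) \<in> Fcal s" if F: "F \<in> Fcal s" for F
  proof -
    obtain f where f: "\<And>n x. \<not> x < s ^ n \<Longrightarrow> F (n, x) = 0" "f \<in> Cont s" "conv s F f" using FcalE[OF s F] by blast
    show ?thesis
      by (rule FcalI[OF s _ _ conv_cnj[OF f(3)]]) (use f in \<open>auto simp: Cont_def intro: continuous_on_cnj\<close>)
  qed
  have lim: "F \<in> Fcal s" if "\<forall>k. Fs k \<in> Fcal s" "uniform_limit UNIV Fs F sequentially" for Fs F
    using Fcal_ulim[OF s] that by blast
  have aw: "aW s F \<in> Fcal s" if F: "F \<in> Fcal s" for F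
  proof -
    obtain f where f: "\<And>n x. \<not> x < s ^ n \<Longrightarrow> F (n, x) = 0" "f \<in> Cont s" "conv s F f" using FcalE[OF s F] by blast
    show ?thesis
      by (rule FcalI[OF s _ f(2) conv_aW[OF s f(2) f(3)]]) (simp add: aW_def)
  qed
  have bw: "bW s F \<in> Fcal s" if F: "F \<in> Fcal s" for F
  proof -
    obtain f where f: "\<And>n x. \<not> x < s ^ n \<Longrightarrow> F (n, x) = 0" "f \<in> Cont s" "conv s F f" using FcalE[OF s F] by blast
    show ?thesis
      by (rule FcalI[OF s _ f(2) conv_bW[OF s f(2) f(3)]]) (simp add: bW_def)
  qed
  have fc: "fun_cstar s (Fcal s)"
    unfolding fun_cstar_def
  proof (intro conjI ballI allI impI)
    show "Fcal s \<subseteq> {F. (\<forall>v. v \<notin> V s \<longrightarrow> F v = 0) \<and> bounded (range F)}" by (rule sub)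
    show "(\<lambda>v. 0) \<in> Fcal s" by (rule zero)
  qed (auto intro: add mult cmult cnj lim)
  show ?thesis
    unfolding admissible_def
  proof (intro conjI ballI)
    show "fun_cstar s (Fcal s)" by (rule fc)
  qed (auto intro: aw bw femb_Fcal[OF s])
qed



definition delta :: "nat \<Rightarrow> nat \<Rightarrow> vec" where
  "delta n x = (\<lambda>v. if v = (n, x) then 1 else 0)"

definition chi :: "nat \<Rightarrow> nat \<Rightarrow> (nat \<Rightarrow> nat) \<Rightarrow> complex" where
  "chi k c = (\<lambda>a. if a k = c then 1 else 0)"

lemma chi_Cont: "chi k c \<in> Cont s"
proof -
  have "continuous_on UNIV (chi k c)"
    using continuous_on_compose[OF continuous_on_product_coordinates[of k]
          Topological_Spaces.continuous_on_discrete[of _ "\<lambda>m::nat. if m = c then 1 else (0::complex)"]]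
    by (simp add: o_def chi_def)
  then show ?thesis by (auto simp: Cont_def intro: continuous_on_subset)
qed

lemma mod_s_pow: "1 \<le> n \<Longrightarrow> (x + j * s ^ n) mod s = (x::nat) mod s"
proof -
  assume "1 \<le> n"
  then obtain m where "n = Suc m" by (cases n) auto
  then have e: "x + j * s ^ n = x + (j * s ^ m) * s" by (simp add: algebra_simps)
  show ?thesis by (simp only: e mod_mult_self1)
qed

lemma delta0:
  assumes s: "2 \<le> s"
  shows "delta 0 0 = (\<lambda>v. (of_nat s / (1 - of_nat s)) *
           (bW s (femb s (chi 1 0)) v + (-1) * femb s (chi 1 0) v))"
proof
  fix v show "delta 0 0 v = (of_nat s / (1 - of_nat s)) *
           (bW s (femb s (chi 1 0)) v + (-1) * femb s (chi 1 0) v)"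
  proof (cases v)
    case (Pair n x)
    have s0: "0 < s" using s by simp
    have s1: "(1::complex) - of_nat s \<noteq> 0"
    proof
      assume "(1::complex) - of_nat s = 0"
      then have "(of_nat s :: complex) = of_nat 1" by simp
      then have "s = 1" by (simp only: of_nat_eq_iff)
      then show False using s by simp
    qed
    have fe: "femb s (chi 1 0) (m, y) = (if y < s ^ m \<and> y mod s = 0 then 1 else 0)" for m y
      by (simp add: femb_def chi_def emb_def)
    have bw: "bW s (femb s (chi 1 0)) (n, x) =
        (if x < s ^ n then (\<Sum>j<s. (if (x + j * s ^ n) mod s = 0 then 1 else 0)) / of_nat s else 0)"
    proof (cases "x < s ^ n")
      case True
      have "(\<Sum>j<s. femb s (chi 1 0) (n + 1, x + j * s ^ n)) = (\<Sum>j<s. (if (x + j * s ^ n) mod s = 0 then 1 else 0))"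
        using lt_pow_Suc[OF True] by (intro sum.cong) (auto simp: femb_def chi_def emb_def)
      then show ?thesis using True by (simp add: bW_def)
    qed (simp add: bW_def)
    show ?thesis
    proof (cases "x < s ^ n")
      case False
      then show ?thesis using Pair by (auto simp: delta_def bW_def femb_def)
    next
      case True
      show ?thesis
      proof (cases "n = 0")
        case True
        then have x0: "x = 0" using \<open>x < s ^ n\<close> by simp
        have "(\<Sum>j<s. (if (x + j * s ^ n) mod s = 0 then 1 else (0::complex))) = (\<Sum>j<s. (if j = 0 then 1 else 0))"
          using True x0 by (intro sum.cong) auto
        also have "\<dots> = 1" using s0 by simp
        finally have "bW s (femb s (chi 1 0)) (n, x) = 1 / of_nat s" using bw \<open>x < s^n\<close> by simp
        moreover have "femb s (chi 1 0) (n, x) = 1" using fe[of n x] True x0 by simp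
        ultimately show ?thesis using Pair True x0 s0 s1
          by (simp add: delta_def field_simps)
      next
        case False
        have "(\<Sum>j<s. (if (x + j * s ^ n) mod s = 0 then 1 else (0::complex))) = (\<Sum>j<s. (if x mod s = 0 then 1 else 0))"
          using False mod_s_pow[of n x _ s] by (intro sum.cong) auto
        also have "\<dots> = of_nat s * (if x mod s = 0 then 1 else 0)" by simp
        finally have "bW s (femb s (chi 1 0)) (n, x) = (if x mod s = 0 then 1 else 0)"
          using bw \<open>x < s^n\<close> s0 by simp
        moreover have "femb s (chi 1 0) (n, x) = (if x mod s = 0 then 1 else 0)" using fe[of n x] \<open>x < s^n\<close> by simp
        ultimately show ?thesis using Pair False by (simp add: delta_def)
      qed
    qed
  qed
qed

lemma deltaS:
  assumes s: "0 < s" and y0: "y0 < s ^ Suc n"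
  shows "delta (Suc n) y0 = (\<lambda>v. aW s (delta n (y0 mod s ^ n)) v * femb s (chi (Suc n) y0) v)"
proof
  fix v show "delta (Suc n) y0 v = aW s (delta n (y0 mod s ^ n)) v * femb s (chi (Suc n) y0) v"
  proof (cases v)
    case (Pair m y)
    show ?thesis
    proof (cases "m = Suc n \<and> y < s ^ Suc n \<and> y mod s ^ n = y0 mod s ^ n \<and> y = y0")
      case True then show ?thesis using Pair y0
        by (simp add: delta_def aW_def femb_def chi_def emb_def)
    next
      case False
      have l: "delta (Suc n) y0 v = 0" using False Pair y0 by (auto simp: delta_def)
      have "aW s (delta n (y0 mod s ^ n)) v * femb s (chi (Suc n) y0) v = 0"
      proof (rule ccontr)
        assume ne: "aW s (delta n (y0 mod s ^ n)) v * femb s (chi (Suc n) y0) v \<noteq> 0"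
        then have a: "aW s (delta n (y0 mod s ^ n)) v \<noteq> 0" and b: "femb s (chi (Suc n) y0) v \<noteq> 0" by auto
        from a Pair have m: "m = Suc n" "y mod s ^ n = y0 mod s ^ n"
          by (auto simp: aW_def delta_def split: if_splits)
        from a Pair have m2: "y < s ^ m" by (auto simp: aW_def split: if_splits)
        from b Pair have "y mod s ^ (Suc n) = y0" by (auto simp: femb_def chi_def emb_def split: if_splits)
        with m m2 have "y = y0" by simp
        with m m2 False show False by simp
      qed
      then show ?thesis using l by simp
    qed
  qed
qed

lemma Fcal_min:
  assumes s: "2 \<le> s" and B: "admissible s B"
  shows "Fcal s \<subseteq> B"
proof -
  have s0: "0 < s" using s by simp
  have fc: "fun_cstar s B" and femb: "\<And>f. f \<in> Cont s \<Longrightarrow> femb s f \<in> B"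
    and aw: "\<And>F. F \<in> B \<Longrightarrow> aW s F \<in> B" and bw: "\<And>F. F \<in> B \<Longrightarrow> bW s F \<in> B"
    using B unfolding admissible_def by blast+
  have zero: "(\<lambda>v. 0) \<in> B" and add: "\<And>F G. F \<in> B \<Longrightarrow> G \<in> B \<Longrightarrow> (\<lambda>v. F v + G v) \<in> B"
    and mult: "\<And>F G. F \<in> B \<Longrightarrow> G \<in> B \<Longrightarrow> (\<lambda>v. F v * G v) \<in> B"
    and cmult: "\<And>F c. F \<in> B \<Longrightarrow> (\<lambda>v. c * F v) \<in> B"
    and lim: "\<And>Fs F. (\<forall>k. Fs k \<in> B) \<Longrightarrow> uniform_limit UNIV Fs F sequentially \<Longrightarrow> F \<in> B"
    using fc unfolding fun_cstar_def by blast+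
  have sums: "finite A \<Longrightarrow> (\<forall>i\<in>A. H i \<in> B) \<Longrightarrow> (\<lambda>v. \<Sum>i\<in>A. H i v) \<in> B" for A :: "'b set" and H
  proof (induction A rule: finite_induct)
    case empty then show ?case using zero by simp
  next
    case (insert a A)
    then have "(\<lambda>v. H a v + (\<Sum>i\<in>A. H i v)) \<in> B" using add[of "H a" "\<lambda>v. \<Sum>i\<in>A. H i v"] by simp
    then show ?case using insert by simp
  qed
  have deltas: "\<forall>x < s ^ n. delta n x \<in> B" for n
  proof (induction n)
    case 0
    have "(\<lambda>v. (of_nat s / (1 - of_nat s)) * (bW s (femb s (chi 1 0)) v + (-1) * femb s (chi 1 0) v)) \<in> B"
    proof -
      have c: "femb s (chi 1 0) \<in> B" by (rule femb[OF chi_Cont])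
      have "(\<lambda>v. (-1) * femb s (chi 1 0) v) \<in> B" by (rule cmult[OF c])
      then have "(\<lambda>v. bW s (femb s (chi 1 0)) v + (-1) * femb s (chi 1 0) v) \<in> B"
        using add[OF bw[OF c]] by blast
      then show ?thesis by (rule cmult)
    qed
    then show ?case using delta0[OF s] by simp
  next
    case (Suc n)
    show ?case
    proof (intro allI impI)
      fix y0 assume y0: "y0 < s ^ Suc n"
      have "y0 mod s ^ n < s ^ n" using s0 by simp
      then have dB: "delta n (y0 mod s ^ n) \<in> B" using Suc by blast
      have "(\<lambda>v. aW s (delta n (y0 mod s ^ n)) v * femb s (chi (Suc n) y0) v) \<in> B"
        by (rule mult[OF aw[OF dB] femb[OF chi_Cont]])
      then show "delta (Suc n) y0 \<in> B" using deltaS[OF s0 y0] by simp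
    qed
  qed
  show ?thesis
  proof
    fix F assume F: "F \<in> Fcal s"
    obtain f where f: "\<And>n x. \<not> x < s ^ n \<Longrightarrow> F (n, x) = 0" "f \<in> Cont s" "conv s F f"
      using FcalE[OF s0 F] by blast
    define G where "G = (\<lambda>v. F v - femb s f v)"
    have G0: "G (n, x) = 0" if "\<not> x < s ^ n" for n x using f(1) that by (simp add: G_def femb_def)
    have Gc: "\<forall>e>0. \<exists>N. \<forall>n\<ge>N. \<forall>x<s ^ n. cmod (G (n, x)) \<le> e"
      using f(3) unfolding conv_def by (simp add: G_def femb_def)
    define Vk where "Vk k = Sigma {..<k} (\<lambda>n. {..<s ^ n})" for k
    define T where "T k = (\<lambda>v. \<Sum>p\<in>Vk k. G p * delta (fst p) (snd p) v)" for k
    have finV: "finite (Vk k)" for k by (simp add: Vk_def)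
    have T_eq: "T k v = (if v \<in> Vk k then G v else 0)" for k v
    proof -
      have "T k v = (\<Sum>p\<in>Vk k. if v = p then G p else 0)"
        unfolding T_def by (intro sum.cong) (auto simp: delta_def)
      also have "\<dots> = (if v \<in> Vk k then G v else 0)" using finV by simp
      finally show ?thesis .
    qed
    have TB: "T k \<in> B" for k
      unfolding T_def using finV deltas cmult by (intro sums) (auto simp: Vk_def)
    have ul: "uniform_limit UNIV T G sequentially"
      unfolding uniform_limit_iff eventually_sequentially
    proof (intro allI impI)
      fix e :: real assume e: "e > 0"
      obtain N where N: "\<forall>n\<ge>N. \<forall>x<s ^ n. cmod (G (n, x)) \<le> e/2" using Gc e by (meson half_gt_zero)
      have "dist (T k v) (G v) < e" if "N \<le> k" for k v
      proof (cases v)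
        case (Pair n x)
        show ?thesis
        proof (cases "v \<in> Vk k")
          case True then show ?thesis using e by (simp add: T_eq)
        next
          case False
          show ?thesis
          proof (cases "x < s ^ n")
            case True
            then have "k \<le> n" using False Pair by (auto simp: Vk_def)
            then have "cmod (G (n, x)) \<le> e/2" using N that True by auto
            then show ?thesis using False Pair e by (simp add: T_eq dist_norm)
          next
            case False2: False
            then show ?thesis using False Pair e G0 by (simp add: T_eq dist_norm)
          qed
        qed
      qed
      then show "\<exists>N. \<forall>n\<ge>N. \<forall>x\<in>UNIV. dist (T n x) (G x) < e" by blast
    qed
    have "G \<in> B" using lim[OF _ ul] TB by blast
    then have "(\<lambda>v. G v + femb s f v) \<in> B" using add femb f(2) by blast
    moreover have "(\<lambda>v. G v + femb s f v) = F" by (simp add: G_def)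
    ultimately show "F \<in> B" by simp
  qed
qed



definition rs :: "nat \<Rightarrow> complex" where "rs s = complex_of_real (sqrt (real s))"

definition Wadj :: "nat \<Rightarrow> op" where
  "Wadj s h = (\<lambda>(n, x). if x < s ^ n then (\<Sum>j<s. h (n + 1, x + j * s ^ n)) / rs s else 0)"

definition Sg :: "nat \<Rightarrow> ((nat \<times> nat) \<times> nat) set" where
  "Sg s = Sigma (V s) (\<lambda>_. {..<s})"

definition phi :: "nat \<Rightarrow> (nat \<times> nat) \<times> nat \<Rightarrow> nat \<times> nat" where
  "phi s p = (Suc (fst (fst p)), snd (fst p) + snd p * s ^ fst (fst p))"

lemma rs_sq: "rs s * rs s = of_nat s"
proof -
  have "sqrt (real s) * sqrt (real s) = real s" by simp
  then have "complex_of_real (sqrt (real s)) * complex_of_real (sqrt (real s)) = complex_of_real (real s)"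
    by (metis of_real_mult)
  then show ?thesis by (simp add: rs_def)
qed

lemma rs_nz: "0 < s \<Longrightarrow> rs s \<noteq> 0"
  unfolding rs_def by simp

lemma cmod_rs: "cmod (rs s) = sqrt (real s)" unfolding rs_def by simp

lemma cnj_rs: "cnj (rs s) = rs s" unfolding rs_def by simp

lemma phi_inj: assumes "0 < s" shows "inj_on (phi s) (Sg s)"
proof (rule inj_onI)
  fix p q assume p: "p \<in> Sg s" and q: "q \<in> Sg s" and e: "phi s p = phi s q"
  obtain n x j where pp: "p = ((n, x), j)" "x < s ^ n" "j < s" using p by (auto simp: Sg_def V_def)
  obtain n' x' j' where qq: "q = ((n', x'), j')" "x' < s ^ n'" "j' < s" using q by (auto simp: Sg_def V_def)
  from e pp qq have n: "n' = n" and y: "x + j * s ^ n = x' + j' * s ^ n" by (auto simp: phi_def)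
  have "x = x'" using arg_cong[OF y, of "\<lambda>z. z mod s ^ n"] pp qq n by simp
  moreover have "j = j'" using arg_cong[OF y, of "\<lambda>z. z div s ^ n"] pp qq n
    by (simp add: div_add_pow)
  ultimately show "p = q" using pp qq n by simp
qed

lemma phi_img: assumes "0 < s" shows "phi s ` Sg s = {(m, y). 1 \<le> m \<and> y < s ^ m}"
proof
  show "phi s ` Sg s \<subseteq> {(m, y). 1 \<le> m \<and> y < s ^ m}"
    using lt_pow_Suc by (auto simp: phi_def Sg_def V_def)
next
  show "{(m, y). 1 \<le> m \<and> y < s ^ m} \<subseteq> phi s ` Sg s"
  proof clarify
    fix m y assume m: "1 \<le> m" "y < s ^ m"
    then obtain n where n: "m = Suc n" by (cases m) auto
    have d: "y = y mod s ^ n + (y div s ^ n) * s ^ n" "y div s ^ n < s" "y mod s ^ n < s ^ n"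
      using decomp_pow[OF assms, of y n] m n by auto
    have "((n, y mod s ^ n), y div s ^ n) \<in> Sg s" using d by (simp add: Sg_def V_def)
    moreover have "phi s ((n, y mod s ^ n), y div s ^ n) = (m, y)" using d n by (simp add: phi_def)
    ultimately show "(m, y) \<in> phi s ` Sg s" by (metis image_eqI)
  qed
qed

lemma l2_summable: "g \<in> l2 s \<Longrightarrow> (\<lambda>v. (cmod (g v))\<^sup>2) summable_on A"
  unfolding l2_def using summable_on_subset_banach by blast

lemma l2_van: "g \<in> l2 s \<Longrightarrow> \<not> x < s ^ n \<Longrightarrow> g (n, x) = 0"
  unfolding l2_def V_def by auto

lemma sq_phi_summable:
  assumes "0 < s" "h \<in> l2 s"
  shows "(\<lambda>p. (cmod (h (phi s p)))\<^sup>2) summable_on Sg s"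
proof -
  have "(\<lambda>v. (cmod (h v))\<^sup>2) summable_on (phi s ` Sg s)" using l2_summable[OF assms(2)] .
  then show ?thesis using summable_on_reindex[OF phi_inj[OF assms(1)], of "\<lambda>v. (cmod (h v))\<^sup>2"] by (simp add: o_def)
qed

lemma sq_phi_infsum:
  assumes "0 < s" "h \<in> l2 s"
  shows "infsum (\<lambda>p. (cmod (h (phi s p)))\<^sup>2) (Sg s) \<le> infsum (\<lambda>v. (cmod (h v))\<^sup>2) UNIV"
proof -
  have "infsum (\<lambda>p. (cmod (h (phi s p)))\<^sup>2) (Sg s) = infsum (\<lambda>v. (cmod (h v))\<^sup>2) (phi s ` Sg s)"
    using infsum_reindex[OF phi_inj[OF assms(1)], of "\<lambda>v. (cmod (h v))\<^sup>2"] by (simp add: o_def)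
  also have "\<dots> \<le> infsum (\<lambda>v. (cmod (h v))\<^sup>2) UNIV"
    by (intro infsum_mono_neutral l2_summable[OF assms(2)]) auto
  finally show ?thesis .
qed

lemma Sg_split_sum:
  fixes F :: "(nat \<times> nat) \<times> nat \<Rightarrow> 'b::banach"
  assumes "F summable_on Sg s"
  shows "infsum F (Sg s) = infsum (\<lambda>p. \<Sum>j<s. F (p, j)) (V s)"
proof -
  have "infsum (\<lambda>p. infsum (\<lambda>j. F (p, j)) {..<s}) (V s) = infsum F (Sg s)"
    using infsum_Sigma_banach[of F "V s" "\<lambda>_. {..<s}"] assms by (simp add: Sg_def)
  then show ?thesis by simp
qed

lemma Sg_split_summable:
  fixes F :: "(nat \<times> nat) \<times> nat \<Rightarrow> real"
  assumes "F summable_on Sg s"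
  shows "(\<lambda>p. \<Sum>j<s. F (p, j)) summable_on (V s)"
proof -
  have "(\<lambda>p. infsum (\<lambda>j. F (p, j)) {..<s}) summable_on (V s)"
    using summable_on_SigmaD[of F "V s" "\<lambda>_. {..<s}"] assms by (simp add: Sg_def)
  then show ?thesis by simp
qed

lemma Wadj_bound_pt:
  assumes "0 < s" "x < s ^ n"
  shows "(cmod (Wadj s h (n, x)))\<^sup>2 \<le> (\<Sum>j<s. (cmod (h (phi s ((n, x), j))))\<^sup>2)"
proof -
  have "cmod (Wadj s h (n, x)) = cmod (\<Sum>j<s. h (n + 1, x + j * s ^ n)) / sqrt (real s)"
    using assms by (simp add: Wadj_def norm_divide cmod_rs)
  also have "\<dots> \<le> (\<Sum>j<s. cmod (h (n + 1, x + j * s ^ n))) / sqrt (real s)"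
    by (intro divide_right_mono norm_sum) auto
  finally have a: "cmod (Wadj s h (n, x)) \<le> (\<Sum>j<s. cmod (h (n + 1, x + j * s ^ n))) / sqrt (real s)" .
  have "(cmod (Wadj s h (n, x)))\<^sup>2 \<le> ((\<Sum>j<s. cmod (h (n + 1, x + j * s ^ n))) / sqrt (real s))\<^sup>2"
    using a by (intro power_mono) auto
  also have "\<dots> = (\<Sum>j<s. cmod (h (n + 1, x + j * s ^ n)))\<^sup>2 / real s"
    by (simp add: power_divide)
  also have "\<dots> \<le> ((\<Sum>j<s. (cmod (h (n + 1, x + j * s ^ n)))\<^sup>2) * real s) / real s"
    using sum_squared_le_sum_of_squares[of "\<lambda>j. cmod (h (n + 1, x + j * s ^ n))" "{..<s}"]
    by (intro divide_right_mono) auto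
  also have "\<dots> = (\<Sum>j<s. (cmod (h (n + 1, x + j * s ^ n)))\<^sup>2)" using assms by simp
  finally show ?thesis by (simp add: phi_def)
qed

lemma Wadj_l2:
  assumes "0 < s" "h \<in> l2 s"
  shows "Wadj s h \<in> l2 s" "l2norm (Wadj s h) \<le> l2norm h"
proof -
  define q where "q = (\<lambda>p. (cmod (h (phi s p)))\<^sup>2)"
  have qs: "q summable_on Sg s" using sq_phi_summable[OF assms] by (simp add: q_def)
  have Qs: "(\<lambda>p. \<Sum>j<s. q (p, j)) summable_on V s" by (rule Sg_split_summable[OF qs])
  have bnd: "(cmod (Wadj s h v))\<^sup>2 \<le> (\<Sum>j<s. q (v, j))" if "v \<in> V s" for v
    using that Wadj_bound_pt[OF assms(1)] by (auto simp: q_def V_def)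
  have sV: "(\<lambda>v. (cmod (Wadj s h v))\<^sup>2) summable_on V s"
    by (rule summable_on_comparison_test[OF Qs bnd]) auto
  have van: "Wadj s h v = 0" if "v \<notin> V s" for v using that by (cases v) (auto simp: Wadj_def V_def)
  have sU: "(\<lambda>v. (cmod (Wadj s h v))\<^sup>2) summable_on UNIV"
    using sV by (subst summable_on_cong_neutral[where T = "V s"]) (auto simp: van)
  show "Wadj s h \<in> l2 s" unfolding l2_def using sU van by blast
  have "infsum (\<lambda>v. (cmod (Wadj s h v))\<^sup>2) UNIV = infsum (\<lambda>v. (cmod (Wadj s h v))\<^sup>2) (V s)"
    by (rule infsum_cong_neutral) (auto simp: van)
  also have "\<dots> \<le> infsum (\<lambda>p. \<Sum>j<s. q (p, j)) (V s)"
    by (rule infsum_mono[OF sV Qs bnd])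
  also have "\<dots> = infsum q (Sg s)" using Sg_split_sum[OF qs] by simp
  also have "\<dots> \<le> infsum (\<lambda>v. (cmod (h v))\<^sup>2) UNIV" unfolding q_def by (rule sq_phi_infsum[OF assms])
  finally show "l2norm (Wadj s h) \<le> l2norm h" unfolding l2norm_def by simp
qed

lemma Wadj_bop:
  assumes "0 < s"
  shows "bop s (Wadj s)"
  unfolding bop_def
proof (intro conjI ballI allI)
  show "\<And>g. g \<in> l2 s \<Longrightarrow> Wadj s g \<in> l2 s" using Wadj_l2[OF assms] by blast
  show "\<exists>C. \<forall>g\<in>l2 s. l2norm (Wadj s g) \<le> C * l2norm g" using Wadj_l2[OF assms] by (intro exI[of _ 1]) auto
  fix g h c
  show "Wadj s (\<lambda>v. g v + h v) = (\<lambda>v. Wadj s g v + Wadj s h v)"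
    by (auto simp: Wadj_def sum.distrib add_divide_distrib)
  show "Wadj s (\<lambda>v. c * g v) = (\<lambda>v. c * Wadj s g v)"
    by (auto simp: Wadj_def sum_distrib_left)
qed



lemma ab_le: "0 \<le> a \<Longrightarrow> 0 \<le> b \<Longrightarrow> a * b \<le> a\<^sup>2 + (b::real)\<^sup>2"
proof -
  assume a: "0 \<le> a" "0 \<le> b"
  have "0 \<le> (a - b)\<^sup>2" by simp
  then have "2 * a * b \<le> a\<^sup>2 + b\<^sup>2" by (simp add: power2_diff algebra_simps)
  moreover have "0 \<le> a * b" using a by simp
  ultimately show ?thesis by linarith
qed

lemma Wop_rs: "Wop s g = (\<lambda>(n, x). if n = 0 \<or> \<not> x < s ^ n then 0 else g (n - 1, x mod s ^ (n - 1)) / rs s)"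
  unfolding Wop_def rs_def by (rule refl)

lemma W_adj:
  assumes s: "0 < s" and g: "g \<in> l2 s" and h: "h \<in> l2 s"
  shows "l2inner (Wop s g) h = l2inner g (Wadj s h)"
proof -
  define Phi where "Phi = (\<lambda>v. cnj (Wop s g v) * h v)"
  define Psi where "Psi = (\<lambda>v. cnj (g v) * Wadj s h v)"
  define F where "F = (\<lambda>p. cnj (g (fst p)) / rs s * h (phi s p))"
  have PhiF: "Phi (phi s p) = F p" if "p \<in> Sg s" for p
  proof -
    obtain n x j where p0: "p = ((n, x), j)" by (metis prod.collapse)
    then have p: "p = ((n, x), j)" "x < s ^ n" "j < s" using that by (auto simp: Sg_def V_def)
    have y: "x + j * s ^ n < s ^ Suc n" using lt_pow_Suc[OF p(2,3)] .
    have "Wop s g (phi s p) = g (n, x) / rs s" using p y by (simp add: Wop_rs phi_def)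
    then show ?thesis using p by (simp add: Phi_def F_def cnj_rs)
  qed
  have step1: "infsum Phi UNIV = infsum Phi (phi s ` Sg s)"
  proof (rule infsum_cong_neutral)
    fix v assume "v \<in> UNIV - phi s ` Sg s"
    then obtain m y where v: "v = (m, y)" "\<not> (1 \<le> m \<and> y < s ^ m)" using phi_img[OF s] by auto
    then show "Phi v = 0" by (auto simp: Phi_def Wop_rs)
  qed auto
  have step2: "infsum Phi (phi s ` Sg s) = infsum F (Sg s)"
  proof -
    have "infsum Phi (phi s ` Sg s) = infsum (Phi \<circ> phi s) (Sg s)" by (rule infsum_reindex[OF phi_inj[OF s]])
    also have "\<dots> = infsum F (Sg s)" by (rule infsum_cong) (simp add: PhiF)
    finally show ?thesis .
  qed
  have Fsum: "F summable_on Sg s"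
  proof -
    have sg: "(\<lambda>p. (cmod (g (fst p)))\<^sup>2) summable_on Sg s"
      unfolding Sg_def
    proof (rule summable_on_SigmaI[where g = "\<lambda>x. real s * (cmod (g x))\<^sup>2"])
      show "((\<lambda>y. (cmod (g (fst (x, y))))\<^sup>2) has_sum real s * (cmod (g x))\<^sup>2) {..<s}" for x
        using has_sum_constant[of "{..<s}" "(cmod (g x))\<^sup>2"] by simp
      show "(\<lambda>x. real s * (cmod (g x))\<^sup>2) summable_on V s"
        by (rule summable_on_cmult_right[OF l2_summable[OF g]])
    qed auto
    have sh: "(\<lambda>p. (cmod (h (phi s p)))\<^sup>2) summable_on Sg s" by (rule sq_phi_summable[OF s h])
    have sa: "(\<lambda>p. (cmod (g (fst p)))\<^sup>2 + (cmod (h (phi s p)))\<^sup>2) summable_on Sg s"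
      by (rule summable_on_add[OF sg sh])
    have "(\<lambda>p. norm (F p)) summable_on Sg s"
    proof (rule summable_on_comparison_test[OF sa])
      fix p assume "p \<in> Sg s"
      have sq: "1 \<le> sqrt (real s)" using s by simp
      have "norm (F p) = cmod (g (fst p)) * cmod (h (phi s p)) / sqrt (real s)"
        by (simp add: F_def norm_mult norm_divide cmod_rs)
      also have "\<dots> \<le> cmod (g (fst p)) * cmod (h (phi s p)) / 1"
        using sq by (intro divide_left_mono) auto
      also have "\<dots> = cmod (g (fst p)) * cmod (h (phi s p))" by simp
      also have "\<dots> \<le> (cmod (g (fst p)))\<^sup>2 + (cmod (h (phi s p)))\<^sup>2" by (rule ab_le) auto
      finally show "norm (F p) \<le> (cmod (g (fst p)))\<^sup>2 + (cmod (h (phi s p)))\<^sup>2" .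
    qed auto
    then show ?thesis by (rule abs_summable_summable)
  qed
  have step3: "infsum F (Sg s) = infsum (\<lambda>p. \<Sum>j<s. F (p, j)) (V s)" by (rule Sg_split_sum[OF Fsum])
  have step4: "infsum (\<lambda>p. \<Sum>j<s. F (p, j)) (V s) = infsum Psi (V s)"
  proof (rule infsum_cong)
    fix p assume "p \<in> V s"
    then obtain n x where p: "p = (n, x)" "x < s ^ n" by (auto simp: V_def)
    have "(\<Sum>j<s. F (p, j)) = cnj (g (n, x)) * ((\<Sum>j<s. h (n + 1, x + j * s ^ n)) / rs s)"
      using p by (simp add: F_def phi_def sum_distrib_left sum_divide_distrib)
    then show "(\<Sum>j<s. F (p, j)) = Psi p" using p by (simp add: Psi_def Wadj_def)
  qed
  have step5: "infsum Psi (V s) = infsum Psi UNIV"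
  proof (rule infsum_cong_neutral)
    fix v assume "v \<in> UNIV - V s"
    then show "Psi v = 0" by (cases v) (auto simp: Psi_def Wadj_def V_def)
  qed auto
  show ?thesis unfolding l2inner_def
    using step1 step2 step3 step4 step5 by (simp add: Phi_def Psi_def)
qed

lemma MF_l2:
  assumes H0: "\<forall>v. v \<notin> V s \<longrightarrow> H v = 0" and HC: "\<forall>v. cmod (H v) \<le> C" and g: "g \<in> l2 s"
  shows "MF H g \<in> l2 s" "l2norm (MF H g) \<le> C * l2norm g"
proof -
  have C0: "0 \<le> C" using HC norm_ge_zero order_trans by blast
  have gs: "(\<lambda>v. (cmod (g v))\<^sup>2) summable_on UNIV" by (rule l2_summable[OF g])
  have cs: "(\<lambda>v. C\<^sup>2 * (cmod (g v))\<^sup>2) summable_on UNIV" by (rule summable_on_cmult_right[OF gs])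
  have le: "(cmod (MF H g v))\<^sup>2 \<le> C\<^sup>2 * (cmod (g v))\<^sup>2" for v
  proof -
    have "cmod (MF H g v) = cmod (H v) * cmod (g v)" by (simp add: MF_def norm_mult)
    also have "\<dots> \<le> C * cmod (g v)" using HC[rule_format, of v] by (intro mult_right_mono) auto
    finally have "cmod (MF H g v) \<le> C * cmod (g v)" .
    then have "(cmod (MF H g v))\<^sup>2 \<le> (C * cmod (g v))\<^sup>2" by (intro power_mono) auto
    then show ?thesis by (simp add: power_mult_distrib)
  qed
  have ms: "(\<lambda>v. (cmod (MF H g v))\<^sup>2) summable_on UNIV"
    by (rule summable_on_comparison_test[OF cs]) (use le in auto)
  have "\<forall>v. v \<notin> V s \<longrightarrow> MF H g v = 0" using H0 by (simp add: MF_def)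
  then show "MF H g \<in> l2 s" using ms by (simp add: l2_def)
  have "infsum (\<lambda>v. (cmod (MF H g v))\<^sup>2) UNIV \<le> infsum (\<lambda>v. C\<^sup>2 * (cmod (g v))\<^sup>2) UNIV"
    by (rule infsum_mono[OF ms cs le])
  also have "\<dots> = C\<^sup>2 * infsum (\<lambda>v. (cmod (g v))\<^sup>2) UNIV" by (rule infsum_cmult_right) (use gs in auto)
  finally have "sqrt (infsum (\<lambda>v. (cmod (MF H g v))\<^sup>2) UNIV) \<le> sqrt (C\<^sup>2 * infsum (\<lambda>v. (cmod (g v))\<^sup>2) UNIV)"
    by (rule real_sqrt_le_mono)
  also have "\<dots> = C * sqrt (infsum (\<lambda>v. (cmod (g v))\<^sup>2) UNIV)" using C0 by (simp add: real_sqrt_mult)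
  finally show "l2norm (MF H g) \<le> C * l2norm g" by (simp add: l2norm_def)
qed

lemma MF_bop:
  assumes H0: "\<forall>v. v \<notin> V s \<longrightarrow> H v = 0" and HC: "\<forall>v. cmod (H v) \<le> C"
  shows "bop s (MF H)"
  unfolding bop_def
proof (intro conjI ballI allI)
  show "\<And>g. g \<in> l2 s \<Longrightarrow> MF H g \<in> l2 s" using MF_l2[OF H0 HC] by blast
  show "\<exists>C. \<forall>g\<in>l2 s. l2norm (MF H g) \<le> C * l2norm g" using MF_l2[OF H0 HC] by blast
  fix g h c
  show "MF H (\<lambda>v. g v + h v) = (\<lambda>v. MF H g v + MF H h v)" by (auto simp: MF_def algebra_simps)
  show "MF H (\<lambda>v. c * g v) = (\<lambda>v. c * MF H g v)" by (auto simp: MF_def algebra_simps)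
qed

lemma zero_l2: "(\<lambda>v. 0) \<in> l2 s" by (simp add: l2_def)

lemma opnorm_MF:
  assumes H0: "\<forall>v. v \<notin> V s \<longrightarrow> H v = 0" and HC: "\<forall>v. cmod (H v) \<le> C"
  shows "0 \<le> opnorm s (MF H)" "opnorm s (MF H) \<le> C"
proof -
  define S where "S = {l2norm (MF H g) | g. g \<in> l2 s \<and> l2norm g \<le> 1}"
  have C0: "0 \<le> C" using HC norm_ge_zero order_trans by blast
  have bnd: "x \<le> C" if xS: "x \<in> S" for x
  proof -
    obtain g where gx: "x = l2norm (MF H g)" "g \<in> l2 s" "l2norm g \<le> 1" using xS unfolding S_def by blast
    have "x \<le> C * l2norm g" using MF_l2(2)[OF H0 HC gx(2)] gx(1) by simp
    also have "\<dots> \<le> C * 1" using gx(3) C0 by (intro mult_left_mono) auto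
    finally show ?thesis by simp
  qed
  have z: "0 \<in> S"
  proof -
    have "l2norm (\<lambda>v. 0) = 0" by (simp add: l2norm_def)
    moreover have "MF H (\<lambda>v. 0) = (\<lambda>v. 0)" by (simp add: MF_def)
    ultimately show ?thesis unfolding S_def using zero_l2[of s] by force
  qed
  have bdd: "bdd_above S" using bnd by (auto simp: bdd_above_def)
  show "0 \<le> opnorm s (MF H)" unfolding opnorm_def S_def[symmetric] using cSup_upper[OF z bdd] .
  show "opnorm s (MF H) \<le> C" unfolding opnorm_def S_def[symmetric] using z bnd by (intro cSup_least) auto
qed



lemma AW_zero: "(\<lambda>g v. 0) \<in> AW s"
  using AW.smult[OF AW.gen_W[of s], where c = 0] by simp

lemma Wadj_AW:
  assumes "0 < s"
  shows "Wadj s \<in> AW s"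
  by (rule AW.adj[OF AW.gen_W Wadj_bop[OF assms]]) (use W_adj[OF assms] in blast)

lemma AW_comp: "T \<in> AW s \<Longrightarrow> S \<in> AW s \<Longrightarrow> (\<lambda>g. T (S g)) \<in> AW s"
  by (rule AW.comp)

lemma E_eq:
  assumes "0 < s"
  shows "Wadj s (Wop s g) = (\<lambda>(n, x). if x < s ^ n then g (n, x) else 0)"
proof
  fix v show "Wadj s (Wop s g) v = (\<lambda>(n, x). if x < s ^ n then g (n, x) else 0) v"
  proof (cases v)
    case (Pair n x)
    show ?thesis
    proof (cases "x < s ^ n")
      case True
      have "(\<Sum>j<s. Wop s g (n + 1, x + j * s ^ n)) = (\<Sum>j<s. g (n, x) / rs s)"
        using lt_pow_Suc[OF True] True by (intro sum.cong) (auto simp: Wop_rs)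
      also have "\<dots> = of_nat s * g (n, x) / rs s" by simp
      finally have "Wadj s (Wop s g) (n, x) = of_nat s * g (n, x) / (rs s * rs s)"
        using True by (simp add: Wadj_def)
      also have "\<dots> = g (n, x)" using assms by (simp add: rs_sq)
      finally show ?thesis using True Pair by simp
    next
      case False then show ?thesis using Pair by (simp add: Wadj_def)
    qed
  qed
qed

lemma MF_femb_AW:
  assumes "0 < s" "f \<in> Cont s"
  shows "MF (femb s f) \<in> AW s"
proof -
  have "MF (femb s f) = (\<lambda>g. Mf s f (Wadj s (Wop s g)))"
    by (auto simp: fun_eq_iff MF_def Mf_def femb_def E_eq[OF assms(1)])
  moreover have "(\<lambda>g. Mf s f (Wadj s (Wop s g))) \<in> AW s"
    by (rule AW_comp[OF AW.gen_M[OF assms(2)] AW_comp[OF Wadj_AW[OF assms(1)] AW.gen_W]])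
  ultimately show ?thesis by simp
qed

lemma WMW:
  assumes "0 < s"
  shows "Wadj s (Mf s f (Wop s g)) = MF (bW s (femb s f)) g"
proof
  fix v show "Wadj s (Mf s f (Wop s g)) v = MF (bW s (femb s f)) g v"
  proof (cases v)
    case (Pair n x)
    show ?thesis
    proof (cases "x < s ^ n")
      case True
      have "(\<Sum>j<s. Mf s f (Wop s g) (n + 1, x + j * s ^ n)) = (\<Sum>j<s. femb s f (n + 1, x + j * s ^ n) * (g (n, x) / rs s))"
        using lt_pow_Suc[OF True] True by (intro sum.cong) (auto simp: Wop_rs Mf_def femb_def)
      also have "\<dots> = (\<Sum>j<s. femb s f (n + 1, x + j * s ^ n)) * g (n, x) / rs s"
        by (simp add: sum_distrib_right sum_divide_distrib)
      finally have "Wadj s (Mf s f (Wop s g)) (n, x) = (\<Sum>j<s. femb s f (n + 1, x + j * s ^ n)) * g (n, x) / (rs s * rs s)"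
        using True by (simp add: Wadj_def)
      also have "\<dots> = (\<Sum>j<s. femb s f (n + 1, x + j * s ^ n)) / of_nat s * g (n, x)"
        by (simp add: rs_sq)
      finally show ?thesis using True Pair by (simp add: MF_def bW_def)
    next
      case False then show ?thesis using Pair by (simp add: Wadj_def MF_def bW_def)
    qed
  qed
qed

lemma MF_delta0_AW:
  assumes s: "2 \<le> s"
  shows "MF (delta 0 0) \<in> AW s"
proof -
  have s0: "0 < s" using s by simp
  define c0 :: complex where "c0 = of_nat s / (1 - of_nat s)"
  define T1 where "T1 = (\<lambda>g. Wadj s (Mf s (chi 1 0) (Wop s g)))"
  define T2 where "T2 = (\<lambda>g. Mf s (chi 1 0) (Wadj s (Wop s g)))"
  have T1: "T1 \<in> AW s" unfolding T1_def
    by (rule AW_comp[OF Wadj_AW[OF s0] AW_comp[OF AW.gen_M[OF chi_Cont] AW.gen_W]])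
  have T2: "T2 \<in> AW s" unfolding T2_def
    by (rule AW_comp[OF AW.gen_M[OF chi_Cont] AW_comp[OF Wadj_AW[OF s0] AW.gen_W]])
  have "(\<lambda>g v. (-1) * T2 g v) \<in> AW s" by (rule AW.smult[OF T2])
  then have "(\<lambda>g v. T1 g v + (-1) * T2 g v) \<in> AW s" by (rule AW.add[OF T1])
  then have A: "(\<lambda>g v. c0 * (T1 g v + (-1) * T2 g v)) \<in> AW s" by (rule AW.smult)
  have T1e: "T1 g = MF (bW s (femb s (chi 1 0))) g" for g unfolding T1_def by (rule WMW[OF s0])
  have T2e: "T2 g = MF (femb s (chi 1 0)) g" for g
    by (auto simp: T2_def fun_eq_iff MF_def Mf_def femb_def E_eq[OF s0])
  have "MF (delta 0 0) = (\<lambda>g v. c0 * (T1 g v + (-1) * T2 g v))"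
    unfolding T1e T2e by (subst delta0[OF s]) (auto simp: fun_eq_iff MF_def c0_def algebra_simps)
  then show ?thesis using A by simp
qed

lemma sum_sel:
  fixes g :: "vec"
  assumes s: "0 < s" and y0: "y0 < s ^ Suc n"
  shows "(\<Sum>j<s. (if (y0 mod s ^ n + j * s ^ n) mod s ^ Suc n = y0 then 1 else 0) * g (Suc n, y0 mod s ^ n + j * s ^ n))
         = g (Suc n, y0)"
proof -
  define x where "x = y0 mod s ^ n"
  define j0 where "j0 = y0 div s ^ n"
  have d: "y0 = x + j0 * s ^ n" "j0 < s" "x < s ^ n"
    using decomp_pow[OF s y0] by (auto simp: x_def j0_def)
  have "(\<Sum>j<s. (if (x + j * s ^ n) mod s ^ Suc n = y0 then 1 else 0) * g (Suc n, x + j * s ^ n))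
      = (\<Sum>j<s. if j = j0 then g (Suc n, y0) else 0)"
  proof (intro sum.cong refl)
    fix j assume "j \<in> {..<s}"
    then have j: "j < s" by simp
    have lt: "x + j * s ^ n < s ^ Suc n" using lt_pow_Suc[OF d(3) j] .
    have "(x + j * s ^ n = y0) = (j = j0)"
    proof
      assume "x + j * s ^ n = y0"
      then show "j = j0" using div_add_pow[OF d(3), of j] by (simp add: j0_def)
    qed (use d in simp)
    then show "(if (x + j * s ^ n) mod s ^ Suc n = y0 then 1 else 0) * g (Suc n, x + j * s ^ n)
        = (if j = j0 then g (Suc n, y0) else 0)"
      using lt d by auto
  qed
  also have "\<dots> = g (Suc n, y0)" using d(2) by simp
  finally show ?thesis by (simp add: x_def)
qed

lemma step_op:
  assumes s: "0 < s" and y0: "y0 < s ^ Suc n"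
  shows "MF (delta (Suc n) y0) g = (\<lambda>v. of_nat s *
     Mf s (chi (Suc n) y0) (Wop s (MF (delta n (y0 mod s ^ n)) (Wadj s (Mf s (chi (Suc n) y0) g)))) v)"
proof
  fix v :: vtx
  obtain m y where v: "v = (m, y)" by (cases v)
  define x where "x = y0 mod s ^ n"
  have x: "x < s ^ n" using s by (simp add: x_def)
  have wa: "Wadj s (Mf s (chi (Suc n) y0) g) (n, x) = g (Suc n, y0) / rs s"
  proof -
    have "(\<Sum>j<s. Mf s (chi (Suc n) y0) g (n + 1, x + j * s ^ n)) =
      (\<Sum>j<s. (if (y0 mod s ^ n + j * s ^ n) mod s ^ Suc n = y0 then 1 else 0) * g (Suc n, y0 mod s ^ n + j * s ^ n))"
      by (intro sum.cong refl) (simp add: Mf_def chi_def emb_def x_def)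
    also have "\<dots> = g (Suc n, y0)" by (rule sum_sel[OF s y0])
    finally show ?thesis using x by (simp add: Wadj_def)
  qed
  show "MF (delta (Suc n) y0) g v = of_nat s *
     Mf s (chi (Suc n) y0) (Wop s (MF (delta n (y0 mod s ^ n)) (Wadj s (Mf s (chi (Suc n) y0) g)))) v"
  proof (cases "m = Suc n \<and> y = y0")
    case True
    have "Wop s (MF (delta n x) (Wadj s (Mf s (chi (Suc n) y0) g))) (Suc n, y0) = g (Suc n, y0) / (rs s * rs s)"
      using y0 wa by (simp add: Wop_rs MF_def delta_def x_def)
    then have "Wop s (MF (delta n x) (Wadj s (Mf s (chi (Suc n) y0) g))) (Suc n, y0) = g (Suc n, y0) / of_nat s"
      by (simp add: rs_sq)
    then show ?thesis using True v y0 s by (simp add: MF_def delta_def Mf_def chi_def emb_def x_def[symmetric])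
  next
    case False
    have l: "MF (delta (Suc n) y0) g v = 0" using False v by (auto simp: MF_def delta_def)
    have "Mf s (chi (Suc n) y0) (Wop s (MF (delta n x) (Wadj s (Mf s (chi (Suc n) y0) g)))) v = 0"
    proof (rule ccontr)
      assume ne: "Mf s (chi (Suc n) y0) (Wop s (MF (delta n x) (Wadj s (Mf s (chi (Suc n) y0) g)))) v \<noteq> 0"
      then have c: "y mod s ^ Suc n = y0" using v by (auto simp: Mf_def chi_def emb_def split: if_splits)
      from ne have w: "Wop s (MF (delta n x) (Wadj s (Mf s (chi (Suc n) y0) g))) (m, y) \<noteq> 0"
        using v by (auto simp: Mf_def)
      then have m: "m \<noteq> 0" "y < s ^ m" by (auto simp: Wop_rs split: if_splits)
      from w m have "MF (delta n x) (Wadj s (Mf s (chi (Suc n) y0) g)) (m - 1, y mod s ^ (m - 1)) \<noteq> 0"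
        by (auto simp: Wop_rs)
      then have "m - 1 = n" by (auto simp: MF_def delta_def split: if_splits)
      then have "m = Suc n" using m by simp
      then have "y = y0" using c m by simp
      then show False using False \<open>m = Suc n\<close> by simp
    qed
    then show ?thesis using l by (simp add: x_def)
  qed
qed

lemma MF_delta_AW:
  assumes s: "2 \<le> s"
  shows "\<forall>x < s ^ n. MF (delta n x) \<in> AW s"
proof (induction n)
  case 0
  then show ?case using MF_delta0_AW[OF s] by simp
next
  case (Suc n)
  have s0: "0 < s" using s by simp
  show ?case
  proof (intro allI impI)
    fix y0 assume y0: "y0 < s ^ Suc n"
    have "y0 mod s ^ n < s ^ n" using s0 by simp
    then have dA: "MF (delta n (y0 mod s ^ n)) \<in> AW s" using Suc by blast
    define T where "T = (\<lambda>g. Mf s (chi (Suc n) y0) (Wop s (MF (delta n (y0 mod s ^ n)) (Wadj s (Mf s (chi (Suc n) y0) g)))))"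
    have "T \<in> AW s" unfolding T_def
      by (rule AW_comp[OF AW.gen_M[OF chi_Cont] AW_comp[OF AW.gen_W AW_comp[OF dA
            AW_comp[OF Wadj_AW[OF s0] AW.gen_M[OF chi_Cont]]]]])
    then have "(\<lambda>g v. of_nat s * T g v) \<in> AW s" by (rule AW.smult)
    moreover have "MF (delta (Suc n) y0) = (\<lambda>g v. of_nat s * T g v)"
      using step_op[OF s0 y0] by (simp add: fun_eq_iff T_def)
    ultimately show "MF (delta (Suc n) y0) \<in> AW s" by simp
  qed
qed



lemma AW_sum:
  assumes "finite A" "\<forall>i\<in>A. T i \<in> AW s"
  shows "(\<lambda>g v. \<Sum>i\<in>A. T i g v) \<in> AW s"
  using assms
proof (induction A rule: finite_induct)
  case empty then show ?case using AW_zero by simp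
next
  case (insert a A)
  then have "(\<lambda>g v. T a g v + (\<lambda>g v. \<Sum>i\<in>A. T i g v) g v) \<in> AW s"
    by (intro AW.add) auto
  then show ?case using insert by simp
qed

lemma MF_Fcal_AW:
  assumes s: "2 \<le> s" and F: "F \<in> Fcal s"
  shows "MF F \<in> AW s"
proof -
  have s0: "0 < s" using s by simp
  obtain f where f: "\<And>n x. \<not> x < s ^ n \<Longrightarrow> F (n, x) = 0" "f \<in> Cont s" "conv s F f"
    using FcalE[OF s0 F] by blast
  define G where "G = (\<lambda>v. F v - femb s f v)"
  have G0: "G (n, x) = 0" if "\<not> x < s ^ n" for n x using f(1) that by (simp add: G_def femb_def)
  have G0': "\<forall>v. v \<notin> V s \<longrightarrow> G v = 0" using G0 by (auto simp: V_def)
  have Gc: "\<forall>e>0. \<exists>N. \<forall>n\<ge>N. \<forall>x<s ^ n. cmod (G (n, x)) \<le> e"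
    using f(3) unfolding conv_def by (simp add: G_def femb_def)
  obtain CF where CF: "CF \<ge> 0" "\<forall>v. cmod (F v) \<le> CF" using Fcal_bounded[OF s0 F] by blast
  obtain M where M: "M \<ge> 0" "\<And>a. a \<in> Zs s \<Longrightarrow> cmod (f a) \<le> M" using Cont_bounded[OF f(2)] by blast
  have femb_b: "cmod (femb s f v) \<le> M" for v
    using M emb_Zs[OF s0] by (cases v) (auto simp: femb_def)
  have GC: "\<forall>v. cmod (G v) \<le> CF + M"
  proof
    fix v
    have "cmod (G v) \<le> cmod (F v) + cmod (femb s f v)" unfolding G_def by (rule norm_triangle_ineq4)
    then show "cmod (G v) \<le> CF + M" using CF femb_b[of v] by smt
  qed
  define Vk where "Vk k = Sigma {..<k} (\<lambda>n. {..<s ^ n})" for k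
  define T where "T k = (\<lambda>v. \<Sum>p\<in>Vk k. G p * delta (fst p) (snd p) v)" for k
  have finV: "finite (Vk k)" for k by (simp add: Vk_def)
  have T_eq: "T k v = (if v \<in> Vk k then G v else 0)" for k v
  proof -
    have "T k v = (\<Sum>p\<in>Vk k. if v = p then G p else 0)"
      unfolding T_def by (intro sum.cong) (auto simp: delta_def)
    also have "\<dots> = (if v \<in> Vk k then G v else 0)" using finV by simp
    finally show ?thesis .
  qed
  have TA: "MF (T k) \<in> AW s" for k
  proof -
    have "MF (T k) = (\<lambda>g v. \<Sum>p\<in>Vk k. (\<lambda>g v. G p * MF (delta (fst p) (snd p)) g v) g v)"
      by (simp add: fun_eq_iff MF_def T_def sum_distrib_right mult.assoc)
    moreover have "(\<lambda>g v. \<Sum>p\<in>Vk k. (\<lambda>g v. G p * MF (delta (fst p) (snd p)) g v) g v) \<in> AW s"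
    proof (rule AW_sum[OF finV], intro ballI)
      fix p assume "p \<in> Vk k"
      then have "snd p < s ^ fst p" by (auto simp: Vk_def)
      then have "MF (delta (fst p) (snd p)) \<in> AW s" using MF_delta_AW[OF s] by blast
      then show "(\<lambda>g v. G p * MF (delta (fst p) (snd p)) g v) \<in> AW s" by (rule AW.smult)
    qed
    ultimately show ?thesis by simp
  qed
  have bopG: "bop s (MF G)" by (rule MF_bop[OF G0' GC])
  have lim: "(\<lambda>k. opnorm s (\<lambda>g v. MF (T k) g v - MF G g v)) \<longlonglongrightarrow> 0"
    unfolding LIMSEQ_iff
  proof (intro allI impI)
    fix r :: real assume r: "r > 0"
    obtain N where N: "\<forall>n\<ge>N. \<forall>x<s ^ n. cmod (G (n, x)) \<le> r/2" using Gc r by (meson half_gt_zero)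
    have "norm (opnorm s (\<lambda>g v. MF (T k) g v - MF G g v) - 0) < r" if k: "N \<le> k" for k
    proof -
      define H where "H = (\<lambda>v. T k v - G v)"
      have eqH: "(\<lambda>g v. MF (T k) g v - MF G g v) = MF H"
        by (simp add: fun_eq_iff MF_def H_def algebra_simps)
      have H0: "\<forall>v. v \<notin> V s \<longrightarrow> H v = 0"
        using G0' by (auto simp: H_def T_eq Vk_def V_def)
      have HC: "\<forall>v. cmod (H v) \<le> r/2"
      proof
        fix v :: vtx
        obtain n x where v: "v = (n, x)" by (cases v)
        show "cmod (H v) \<le> r/2"
        proof (cases "v \<in> Vk k")
          case True then show ?thesis using r by (simp add: H_def T_eq)
        next
          case False
          show ?thesis
          proof (cases "x < s ^ n")
            case True
            then have "k \<le> n" using False v by (auto simp: Vk_def)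
            then have "cmod (G (n, x)) \<le> r/2" using N k True by auto
            then show ?thesis using False v by (simp add: H_def T_eq)
          next
            case False2: False
            then show ?thesis using False v r G0 by (simp add: H_def T_eq)
          qed
        qed
      qed
      have "0 \<le> opnorm s (MF H)" "opnorm s (MF H) \<le> r/2" using opnorm_MF[OF H0 HC] by auto
      then show ?thesis using r eqH by simp
    qed
    then show "\<exists>N. \<forall>k\<ge>N. norm (opnorm s (\<lambda>g v. MF (T k) g v - MF G g v) - 0) < r" by blast
  qed
  have GA: "MF G \<in> AW s" by (rule AW.lim[OF TA bopG lim])
  have "(\<lambda>g v. MF G g v + MF (femb s f) g v) \<in> AW s"
    by (rule AW.add[OF GA MF_femb_AW[OF s0 f(2)]])
  moreover have "(\<lambda>g v. MF G g v + MF (femb s f) g v) = MF F"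
    by (simp add: fun_eq_iff MF_def G_def algebra_simps)
  ultimately show ?thesis by simp
qed

theorem proposition7p1:
  fixes s :: nat
  assumes "s \<ge> 2"
  shows "(\<forall>F\<in>Fcal s. MF F \<in> AW s)
         \<and> admissible s (Fcal s)
         \<and> (\<forall>B. admissible s B \<longrightarrow> Fcal s \<subseteq> B)"
proof (intro conjI ballI allI impI)
  show "\<And>F. F \<in> Fcal s \<Longrightarrow> MF F \<in> AW s" using MF_Fcal_AW[OF assms] by blast
  show "admissible s (Fcal s)" using Fcal_admissible assms by simp
  show "\<And>B. admissible s B \<Longrightarrow> Fcal s \<subseteq> B" using Fcal_min[OF assms] by blast
qed


end
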